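(* Let $d\ge 2$, $\varepsilon>0$, and let $f\in L^1_+(\mathbb{R}^d)\setminus\{0\}$ satisfy \[ \psi_\varepsilon*\log(f*\psi_\varepsilon)(v)=\lambda^{(0)}+\lambda^{(1)}\cdot v+\frac{\lambda^{(2)}}{2}|v|^2\qquad\text{for all }v\in\mathbb{R}^d, \] for some constants $\lambda^{(0)},\lambda^{(2)}\in\mathbb{R}$, $\lambda^{(1)}\in\mathbb{R}^d$. Then $f$ is a Maxwellian, $f=\mathcal{M}_{\rho,u,T}$, one has $\varepsilon|\lambda^{(2)}|<1$, and \[ \rho=\left(\frac{2\pi}{|\lambda^{(2)}|}\right)^{d/2}\exp\left\{\lambda^{(0)}+\frac{\varepsilon|\lambda^{(2)}|d}{2}-\frac{\varepsilon|\lambda^{(1)}|^2}{2(1-\varepsilon|\lambda^{(2)}|)}+\frac{|\lambda^{(1)}|^2}{2|\lambda^{(2)}|(1-\varepsilon|\lambda^{(2)}|)}\right\},\quad u=\frac{\lambda^{(1)}}{|\lambda^{(2)}|},\quad T=\frac{1}{|\lambda^{(2)}|}-\varepsilon . \]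
   Context: $\psi_\varepsilon(v)=(2\pi\varepsilon)^{-d/2}\exp(-|v|^2/(2\varepsilon))$ and $*$ denotes convolution on $\mathbb{R}^d$. The Maxwellian is $\mathcal{M}_{\rho,u,T}(v)=\frac{\rho}{(2\pi T)^{d/2}}\exp\left(-\frac{|v-u|^2}{2T}\right)$ with $\rho,T>0$, $u\in\mathbb{R}^d$. $L^1_+(\mathbb{R}^d)$ denotes nonnegative integrable functions. *)

theory Defs
  imports "HOL-Analysis.Analysis"
begin

definition psi :: "real \<Rightarrow> 'a::euclidean_space \<Rightarrow> real" where
  "psi \<epsilon> (v::'a) = (2 * pi * \<epsilon>) powr (- real DIM('a) / 2) * exp (- (norm v)\<^sup>2 / (2 * \<epsilon>))"

definition conv :: "('a::euclidean_space \<Rightarrow> real) \<Rightarrow> ('a \<Rightarrow> real) \<Rightarrow> 'a \<Rightarrow> real" where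
  "conv f g v = (\<integral>y. f y * g (v - y) \<partial>lborel)"

definition maxwellian :: "real \<Rightarrow> 'a::euclidean_space \<Rightarrow> real \<Rightarrow> 'a \<Rightarrow> real" where
  "maxwellian \<rho> u T (v::'a) = \<rho> / (2 * pi * T) powr (real DIM('a) / 2) * exp (- (norm (v - u))\<^sup>2 / (2 * T))"

end

theory Submission
  imports Defs "HOL-Probability.Distributions" "HOL-Complex_Analysis.Conformal_Mappings"
begin


lemma sum_sq_basis: "(\<Sum>b\<in>Basis. (x \<bullet> b)\<^sup>2) = (norm (x::'a::euclidean_space))\<^sup>2"
proof -
  have "(\<Sum>b\<in>Basis. (x \<bullet> b)\<^sup>2) = x \<bullet> x" by (simp add: euclidean_inner[of x x] power2_eq_square)
  then show ?thesis by (simp add: power2_norm_eq_inner)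
qed

lemma psi_prod:
  fixes m x :: "'a::euclidean_space"
  assumes t: "t > 0"
  shows "psi t (x - m) = (\<Prod>b\<in>Basis. normal_density (m \<bullet> b) (sqrt t) (x \<bullet> b))"
proof -
  have "(\<Prod>b\<in>Basis. normal_density (m \<bullet> b) (sqrt t) (x \<bullet> b))
      = (\<Prod>b\<in>Basis. (1 / sqrt (2*pi*t)) * exp (- ((x - m) \<bullet> b)\<^sup>2 / (2*t)))"
    using t by (intro prod.cong) (auto simp: normal_density_def inner_diff_left)
  also have "\<dots> = (1 / sqrt (2*pi*t)) ^ DIM('a) * exp (\<Sum>b\<in>Basis. - ((x - m) \<bullet> b)\<^sup>2 / (2*t))"
    unfolding prod.distrib prod_constant by (simp add: exp_sum)
  also have "(\<Sum>b\<in>Basis. - ((x - m) \<bullet> b)\<^sup>2 / (2*t)) = - (norm (x - m))\<^sup>2 / (2*t)"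
    by (simp add: sum_divide_distrib[symmetric] sum_negf sum_sq_basis)
  also have "(1 / sqrt (2*pi*t)) ^ DIM('a) = (2*pi*t) powr (- real DIM('a) / 2)"
  proof -
    have p: "2*pi*t > 0" using t by simp
    have "1 / sqrt (2*pi*t) = (2*pi*t) powr (- 1/2)"
      using p by (simp add: powr_half_sqrt[symmetric] powr_minus_divide)
    moreover have e: "((2*pi*t) powr (- 1/2)) ^ DIM('a) = (2*pi*t) powr (real DIM('a) * (- 1/2))"
      by (rule powr_power) (use t in simp)
    moreover have "real DIM('a) * (- 1/2) = - real DIM('a) / 2" by simp
    ultimately show ?thesis by metis
  qed
  finally show ?thesis by (simp add: psi_def)
qed


lemma psi_pos: "t > 0 \<Longrightarrow> psi t x > 0"
  by (simp add: psi_def)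

lemma psi_nonneg: "t > 0 \<Longrightarrow> psi t x \<ge> 0"
  using psi_pos[of t x] by simp

lemma continuous_psi[continuous_intros]: "continuous_on A (psi t)"
  unfolding psi_def divide_inverse by (intro continuous_intros)

lemma borel_psi[measurable]: "psi t \<in> borel_measurable borel"
  by (intro borel_measurable_continuous_onI continuous_psi)

lemma psi_minus: "psi t (- x) = psi t x"
  by (simp add: psi_def)

lemma psi_commute: "psi t (x - y) = psi t (y - x)"
  by (simp add: psi_def norm_minus_commute)

lemma nn_integral_prod_basis:
  fixes g :: "'a::euclidean_space \<Rightarrow> real \<Rightarrow> real"
  assumes [measurable]: "\<And>b. b \<in> Basis \<Longrightarrow> g b \<in> borel_measurable borel"
    and nn: "\<And>b s. b \<in> Basis \<Longrightarrow> 0 \<le> g b s"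
  shows "(\<integral>\<^sup>+x. ennreal (\<Prod>b\<in>Basis. g b (x \<bullet> b)) \<partial>lborel) = (\<Prod>b\<in>Basis. \<integral>\<^sup>+s. ennreal (g b s) \<partial>lborel)"
proof -
  have "(\<integral>\<^sup>+x. ennreal (\<Prod>b\<in>Basis. g b (x \<bullet> b)) \<partial>lborel) = (\<integral>\<^sup>+x. (\<Prod>b\<in>Basis. ennreal (g b (x \<bullet> b))) \<partial>lborel)"
    using nn by (intro nn_integral_cong) (simp add: prod_ennreal)
  also have "\<dots> = (\<Prod>b\<in>Basis. \<integral>\<^sup>+s. ennreal (g b s) \<partial>lborel)"
    by (rule nn_integral_lborel_prod) auto
  finally show ?thesis .
qed

lemma integral_prod_basis:
  fixes g :: "'a::euclidean_space \<Rightarrow> real \<Rightarrow> real"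
  assumes [measurable]: "\<And>b. b \<in> Basis \<Longrightarrow> g b \<in> borel_measurable borel"
    and nn: "\<And>b s. b \<in> Basis \<Longrightarrow> 0 \<le> g b s"
    and int: "\<And>b. b \<in> Basis \<Longrightarrow> integrable lborel (g b)"
  shows "integrable lborel (\<lambda>x. \<Prod>b\<in>Basis. g b (x \<bullet> b))"
    and "(\<integral>x. (\<Prod>b\<in>Basis. g b (x \<bullet> b)) \<partial>lborel) = (\<Prod>b\<in>Basis. \<integral>s. g b s \<partial>lborel)"
proof -
  have meas: "(\<lambda>x. \<Prod>b\<in>Basis. g b (x \<bullet> b)) \<in> borel_measurable lborel"
    by measurable
  have e: "\<And>b. b \<in> Basis \<Longrightarrow> (\<integral>\<^sup>+s. ennreal (g b s) \<partial>lborel) = ennreal (\<integral>s. g b s \<partial>lborel)"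
    using nn int by (intro nn_integral_eq_integral) auto
  have N: "(\<integral>\<^sup>+x. ennreal (\<Prod>b\<in>Basis. g b (x \<bullet> b)) \<partial>lborel) = ennreal (\<Prod>b\<in>Basis. \<integral>s. g b s \<partial>lborel)"
    using nn_integral_prod_basis[of g, OF assms(1,2)] e
    by (simp add: prod_ennreal integral_nonneg_AE nn)
  show I: "integrable lborel (\<lambda>x. \<Prod>b\<in>Basis. g b (x \<bullet> b))"
    using N meas nn by (intro integrableI_nonneg) (auto simp: prod_nonneg)
  have "ennreal (\<integral>x. (\<Prod>b\<in>Basis. g b (x \<bullet> b)) \<partial>lborel) = ennreal (\<Prod>b\<in>Basis. \<integral>s. g b s \<partial>lborel)"
    using N I nn by (subst nn_integral_eq_integral[symmetric]) (auto simp: prod_nonneg)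
  then show "(\<integral>x. (\<Prod>b\<in>Basis. g b (x \<bullet> b)) \<partial>lborel) = (\<Prod>b\<in>Basis. \<integral>s. g b s \<partial>lborel)"
    using nn int by (subst (asm) ennreal_inj) (auto intro!: prod_nonneg integral_nonneg_AE integral_nonneg simp: prod_nonneg)
qed

lemma psi_integral:
  fixes m :: "'a::euclidean_space"
  assumes t: "t > 0"
  shows "integrable lborel (\<lambda>x. psi t (x - m))" "(\<integral>x. psi t (x - m) \<partial>lborel) = 1"
proof -
  note * = integral_prod_basis[of "\<lambda>b. normal_density (m \<bullet> b) (sqrt t)"]
  show "integrable lborel (\<lambda>x. psi t (x - m))"
    using *(1) t by (simp add: psi_prod[OF t])
  show "(\<integral>x. psi t (x - m) \<partial>lborel) = 1"
    using *(2) t by (simp add: psi_prod[OF t])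
qed

lemma psi_integral0:
  assumes t: "t > 0"
  shows "integrable lborel (psi t :: 'a::euclidean_space \<Rightarrow> real)" "(\<integral>x. psi t (x::'a) \<partial>lborel) = 1"
  using psi_integral[OF t, of 0] by simp_all


lemma nd_moment2:
  assumes t: "t > 0"
  shows "integrable lborel (\<lambda>s. normal_density 0 (sqrt t) s * s\<^sup>2)"
    "(\<integral>s. normal_density 0 (sqrt t) s * s\<^sup>2 \<partial>lborel) = t"
proof -
  have h: "has_bochner_integral lborel (\<lambda>x. normal_density 0 (sqrt t) x * (x - 0) ^ (2 * 1))
      (fact (2 * 1) / ((2 / (sqrt t)\<^sup>2)^1 * fact 1))"
    by (rule normal_moment_even) (use t in simp)
  have "fact (2 * 1) / ((2 / (sqrt t)\<^sup>2)^1 * fact 1) = (t::real)"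
    using t by (simp add: fact_numeral)
  with h have "has_bochner_integral lborel (\<lambda>s. normal_density 0 (sqrt t) s * s\<^sup>2) t"
    by simp
  then show "integrable lborel (\<lambda>s. normal_density 0 (sqrt t) s * s\<^sup>2)"
    "(\<integral>s. normal_density 0 (sqrt t) s * s\<^sup>2 \<partial>lborel) = t"
    by (auto simp: has_bochner_integral_iff)
qed

lemma psi_moment2:
  assumes t: "t > 0"
  shows "integrable lborel (\<lambda>x. psi t x * (norm (x::'a::euclidean_space))\<^sup>2)"
    "(\<integral>x. psi t x * (norm (x::'a))\<^sup>2 \<partial>lborel) = t * real DIM('a)"
proof -
  define g where "g c b s = normal_density 0 (sqrt t) s * (if b = c then s\<^sup>2 else 1)" for c b :: 'a and s :: real
  have gm[measurable]: "g c b \<in> borel_measurable borel" for c b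
    unfolding g_def by measurable
  have gnn: "0 \<le> g c b s" for c b s unfolding g_def by simp
  have gi: "integrable lborel (g c b)" for c b
    using nd_moment2(1)[OF t] t unfolding g_def by (cases "b = c") auto
  have gI: "(\<integral>s. g c b s \<partial>lborel) = (if b = c then t else 1)" for c b
    using nd_moment2(2)[OF t] t unfolding g_def by (cases "b = c") auto
  have eq: "psi t x * (norm x)\<^sup>2 = (\<Sum>c\<in>Basis. \<Prod>b\<in>Basis. g c b (x \<bullet> b))" for x :: 'a
  proof -
    have "(\<Prod>b\<in>Basis. g c b (x \<bullet> b)) = psi t x * (x \<bullet> c)\<^sup>2" if c: "c \<in> Basis" for c
    proof -
      have "(\<Prod>b\<in>Basis. g c b (x \<bullet> b)) = (\<Prod>b\<in>Basis. normal_density 0 (sqrt t) (x \<bullet> b)) *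
          (\<Prod>b\<in>Basis. (if b = c then (x \<bullet> b)\<^sup>2 else 1))"
        unfolding g_def prod.distrib by simp
      also have "(\<Prod>b\<in>Basis. (if b = c then (x \<bullet> b)\<^sup>2 else 1)) = (x \<bullet> c)\<^sup>2"
        using c by (simp add: prod.delta)
      also have "(\<Prod>b\<in>Basis. normal_density 0 (sqrt t) (x \<bullet> b)) = psi t x"
        using psi_prod[OF t, of x 0] by simp
      finally show ?thesis .
    qed
    then have "(\<Sum>c\<in>Basis. \<Prod>b\<in>Basis. g c b (x \<bullet> b)) = (\<Sum>c\<in>Basis. psi t x * (x \<bullet> c)\<^sup>2)"
      by (intro sum.cong) auto
    also have "\<dots> = psi t x * (norm x)\<^sup>2"
      by (simp add: sum_distrib_left[symmetric] sum_sq_basis)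
    finally show ?thesis by simp
  qed
  have int: "integrable lborel (\<lambda>x::'a. \<Prod>b\<in>Basis. g c b (x \<bullet> b))" for c
    by (rule integral_prod_basis(1)) (use gnn gi in auto)
  have val: "(\<integral>x. (\<Prod>b\<in>Basis. g c b ((x::'a) \<bullet> b)) \<partial>lborel) = t" if c: "c \<in> Basis" for c
  proof -
    have "(\<integral>x. (\<Prod>b\<in>Basis. g c b ((x::'a) \<bullet> b)) \<partial>lborel) = (\<Prod>b\<in>Basis. \<integral>s. g c b s \<partial>lborel)"
      by (rule integral_prod_basis(2)) (use gnn gi in auto)
    also have "\<dots> = t" using c by (simp add: gI prod.delta)
    finally show ?thesis .
  qed
  show "integrable lborel (\<lambda>x. psi t x * (norm (x::'a))\<^sup>2)"
    unfolding eq using int by (intro Bochner_Integration.integrable_sum) auto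
  have "(\<integral>x. psi t x * (norm (x::'a))\<^sup>2 \<partial>lborel) = (\<Sum>c\<in>Basis. \<integral>x. (\<Prod>b\<in>Basis. g c b ((x::'a) \<bullet> b)) \<partial>lborel)"
    unfolding eq using int by (intro Bochner_Integration.integral_sum) auto
  also have "\<dots> = (\<Sum>c\<in>(Basis::'a set). t)" by (intro sum.cong) (auto simp: val)
  finally show "(\<integral>x. psi t x * (norm (x::'a))\<^sup>2 \<partial>lborel) = t * real DIM('a)" by simp
qed

lemma lborel_distr_uminus_eucl: "distr lborel borel uminus = (lborel :: 'a::euclidean_space measure)"
  by (subst lborel_affine[of "-1" 0]) (auto simp: density_1 one_ennreal_def[symmetric])

lemma integral_reflect:
  fixes f :: "'a::euclidean_space \<Rightarrow> real"
  assumes [measurable]: "f \<in> borel_measurable borel"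
  shows "(\<integral>x. f (- x) \<partial>lborel) = (\<integral>x. f x \<partial>lborel)"
proof -
  have "(\<integral>x. f x \<partial>lborel) = (\<integral>x. f x \<partial>(distr lborel borel uminus))"
    by (simp add: lborel_distr_uminus_eucl)
  also have "\<dots> = (\<integral>x. f (- x) \<partial>lborel)"
    by (rule integral_distr) auto
  finally show ?thesis by simp
qed

lemma le_1_plus_sq: "(a::real) \<le> 1 + a\<^sup>2"
proof -
  have "0 \<le> (a - 1/2) * (a - 1/2)" by simp
  moreover have "(a - 1/2) * (a - 1/2) = a * a - a + 1/4" by (simp add: algebra_simps)
  ultimately show ?thesis by (simp add: power2_eq_square)
qed

lemma psi_moment1:
  assumes t: "t > 0"
  shows "integrable lborel (\<lambda>x. psi t x * (x \<bullet> (w::'a::euclidean_space)))"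
    "(\<integral>x. psi t x * (x \<bullet> (w::'a)) \<partial>lborel) = 0"
proof -
  have "integrable lborel (\<lambda>x. norm w * (psi t x + psi t x * (norm (x::'a))\<^sup>2))"
    using psi_moment2(1)[OF t] psi_integral0(1)[OF t] by auto
  then show I: "integrable lborel (\<lambda>x. psi t x * (x \<bullet> (w::'a)))"
  proof (rule Bochner_Integration.integrable_bound)
    show "AE x in lborel. norm (psi t x * (x \<bullet> w)) \<le> norm (norm w * (psi t x + psi t x * (norm x)\<^sup>2))"
    proof (intro AE_I2)
      fix x :: 'a
      have p: "psi t x \<ge> 0" using psi_nonneg[OF t] .
      have "\<bar>x \<bullet> w\<bar> \<le> norm x * norm w" using Cauchy_Schwarz_ineq2[of x w] by simp
      also have "\<dots> \<le> norm w * (1 + (norm x)\<^sup>2)"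
      proof -
        have "norm x \<le> 1 + (norm x)\<^sup>2" by (rule le_1_plus_sq)
        then show ?thesis by (simp add: mult_left_mono mult.commute)
      qed
      finally have "\<bar>x \<bullet> w\<bar> \<le> norm w * (1 + (norm x)\<^sup>2)" .
      then have "psi t x * \<bar>x \<bullet> w\<bar> \<le> psi t x * (norm w * (1 + (norm x)\<^sup>2))"
        using p by (intro mult_left_mono) auto
      then show "norm (psi t x * (x \<bullet> w)) \<le> norm (norm w * (psi t x + psi t x * (norm x)\<^sup>2))"
        using p by (simp add: abs_mult algebra_simps)
    qed
  qed simp
  have "(\<integral>x. psi t (- x) * ((- x) \<bullet> w) \<partial>lborel) = (\<integral>x. psi t x * (x \<bullet> w) \<partial>lborel)"
    by (rule integral_reflect[of "\<lambda>x. psi t x * (x \<bullet> w)"]) measurable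
  then have "- (\<integral>x. psi t x * (x \<bullet> w) \<partial>lborel) = (\<integral>x. psi t x * (x \<bullet> w) \<partial>lborel)"
    by (simp add: psi_minus)
  then show "(\<integral>x. psi t x * (x \<bullet> (w::'a)) \<partial>lborel) = 0" by simp
qed


lemma lborel_affine_nn:
  fixes f :: "'a::euclidean_space \<Rightarrow> ennreal"
  assumes [measurable]: "f \<in> borel_measurable borel" and c: "c \<noteq> 0"
  shows "(\<integral>\<^sup>+x. f x \<partial>lborel) = ennreal (\<bar>c\<bar>^DIM('a)) * (\<integral>\<^sup>+x. f (a + c *\<^sub>R x) \<partial>lborel)"
  by (subst lborel_affine[OF c, of a])
     (simp add: nn_integral_density nn_integral_distr nn_integral_cmult)

lemma lborel_integral_affine:
  fixes f :: "'a::euclidean_space \<Rightarrow> real"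
  assumes [measurable]: "f \<in> borel_measurable borel" and c: "c \<noteq> 0"
  shows "integrable lborel (\<lambda>x. f (a + c *\<^sub>R x)) \<longleftrightarrow> integrable lborel f"
    and "(\<integral>x. f x \<partial>lborel) = \<bar>c\<bar>^DIM('a) * (\<integral>x. f (a + c *\<^sub>R x) \<partial>lborel)"
proof -
  have N: "(\<integral>\<^sup>+x. ennreal (norm (f x)) \<partial>lborel) = ennreal (\<bar>c\<bar>^DIM('a)) * (\<integral>\<^sup>+x. ennreal (norm (f (a + c *\<^sub>R x))) \<partial>lborel)"
    using c by (intro lborel_affine_nn) auto
  have pos: "0 < \<bar>c\<bar>^DIM('a)" using c by simp
  show I: "integrable lborel (\<lambda>x. f (a + c *\<^sub>R x)) \<longleftrightarrow> integrable lborel f"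
    unfolding integrable_iff_bounded N using pos
    by (auto simp: ennreal_mult_less_top top_unique)
  show "(\<integral>x. f x \<partial>lborel) = \<bar>c\<bar>^DIM('a) * (\<integral>x. f (a + c *\<^sub>R x) \<partial>lborel)"
  proof cases
    assume f: "integrable lborel f"
    then show ?thesis
      using c f I
      by (subst lborel_affine[OF c, of a])
         (simp add: integral_density integral_distr)
  next
    assume "\<not> integrable lborel f"
    with I show ?thesis by (simp add: not_integrable_integral_eq)
  qed
qed

lemma nd_conv:
  assumes s: "s > 0" and t: "t > 0"
  shows "(\<integral>\<^sup>+r. ennreal (normal_density a (sqrt s) r * normal_density c (sqrt t) r) \<partial>lborel)
     = ennreal (normal_density c (sqrt (s+t)) a)"
proof -
  have C: "(\<integral>\<^sup>+y. ennreal (normal_density 0 (sqrt s) (x - y) * normal_density 0 (sqrt t) y) \<partial>lborel)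
      = normal_density 0 (sqrt ((sqrt s)\<^sup>2 + (sqrt t)\<^sup>2)) x" for x
    using conv_normal_density_zero_mean[of "sqrt s" "sqrt t"] s t by (auto dest: fun_cong[of _ _ x])
  have "(\<integral>\<^sup>+r. ennreal (normal_density a (sqrt s) r * normal_density c (sqrt t) r) \<partial>lborel)
     = (\<integral>\<^sup>+y. ennreal (normal_density a (sqrt s) (c + y) * normal_density c (sqrt t) (c + y)) \<partial>lborel)"
    using nn_integral_real_affine[of "\<lambda>r. ennreal (normal_density a (sqrt s) r * normal_density c (sqrt t) r)" 1 c] by simp
  also have "\<dots> = (\<integral>\<^sup>+y. ennreal (normal_density 0 (sqrt s) ((a - c) - y) * normal_density 0 (sqrt t) y) \<partial>lborel)"
  proof -
    have "normal_density a (sqrt s) (c + y) = normal_density 0 (sqrt s) ((a - c) - y)" for y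
    proof -
      have "(c + y - a)\<^sup>2 = (a - c - y - 0)\<^sup>2" by (simp add: power2_eq_square algebra_simps)
      then show ?thesis by (simp add: normal_density_def)
    qed
    moreover have "normal_density c (sqrt t) (c + y) = normal_density 0 (sqrt t) y" for y
      by (simp add: normal_density_def)
    ultimately show ?thesis by simp
  qed
  also have "\<dots> = normal_density 0 (sqrt ((sqrt s)\<^sup>2 + (sqrt t)\<^sup>2)) (a - c)" by (rule C)
  also have "normal_density 0 (sqrt ((sqrt s)\<^sup>2 + (sqrt t)\<^sup>2)) (a - c) = normal_density c (sqrt (s+t)) a"
    using s t by (simp add: normal_density_def)
  finally show ?thesis .
qed

lemma psi_semigroup:
  fixes x w :: "'a::euclidean_space"
  assumes s: "s > 0" and t: "t > 0"
  shows "integrable lborel (\<lambda>y. psi s (x - y) * psi t (y - w))"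
    "(\<integral>y. psi s (x - y) * psi t (y - w) \<partial>lborel) = psi (s + t) (x - w)"
proof -
  define g where "g b r = normal_density (x \<bullet> b) (sqrt s) r * normal_density (w \<bullet> b) (sqrt t) r" for b :: 'a and r
  have gm[measurable]: "g b \<in> borel_measurable borel" for b unfolding g_def by measurable
  have gnn: "0 \<le> g b r" for b r unfolding g_def by simp
  have gN: "(\<integral>\<^sup>+r. ennreal (g b r) \<partial>lborel) = ennreal (normal_density (w \<bullet> b) (sqrt (s+t)) (x \<bullet> b))" for b
    unfolding g_def by (rule nd_conv[OF s t])
  have gi: "integrable lborel (g b)" for b
    using gN[of b] gnn by (intro integrableI_nonneg) auto
  have gI: "(\<integral>r. g b r \<partial>lborel) = normal_density (w \<bullet> b) (sqrt (s+t)) (x \<bullet> b)" for b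
  proof -
    have "ennreal (\<integral>r. g b r \<partial>lborel) = ennreal (normal_density (w \<bullet> b) (sqrt (s+t)) (x \<bullet> b))"
      using gN[of b] gi[of b] gnn by (subst nn_integral_eq_integral[symmetric]) auto
    then show ?thesis using gnn by (subst (asm) ennreal_inj) (auto intro: integral_nonneg_AE)
  qed
  have eq: "psi s (x - y) * psi t (y - w) = (\<Prod>b\<in>Basis. g b (y \<bullet> b))" for y
    unfolding psi_commute[of s x y] unfolding g_def prod.distrib psi_prod[OF s] psi_prod[OF t] ..
  show "integrable lborel (\<lambda>y. psi s (x - y) * psi t (y - w))"
    unfolding eq by (rule integral_prod_basis(1)) (use gnn gi in auto)
  have "(\<integral>y. psi s (x - y) * psi t (y - w) \<partial>lborel) = (\<Prod>b\<in>Basis. \<integral>r. g b r \<partial>lborel)"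
    unfolding eq by (rule integral_prod_basis(2)) (use gnn gi in auto)
  also have "\<dots> = psi (s + t) (x - w)"
    unfolding gI using psi_prod[of "s+t" x w] s t by simp
  finally show "(\<integral>y. psi s (x - y) * psi t (y - w) \<partial>lborel) = psi (s + t) (x - w)" .
qed


lemma dominated_at:
  fixes s :: "'c::first_countable_topology \<Rightarrow> 'a \<Rightarrow> 'b::{banach, second_countable_topology}"
    and w :: "'a \<Rightarrow> real"
  assumes "f \<in> borel_measurable M" "\<And>z. s z \<in> borel_measurable M" "integrable M w"
    and lim: "\<And>x. x \<in> space M \<Longrightarrow> ((\<lambda>z. s z x) \<longlongrightarrow> f x) (at z0 within S)"
    and bound: "eventually (\<lambda>z. AE x in M. norm (s z x) \<le> w x) (at z0 within S)"
  shows "((\<lambda>z. integral\<^sup>L M (s z)) \<longlongrightarrow> integral\<^sup>L M f) (at z0 within S)"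
proof (subst tendsto_at_iff_sequentially, intro allI impI)
  fix X :: "nat \<Rightarrow> 'c" assume XS: "\<forall>i. X i \<in> S - {z0}" and X: "X \<longlonglongrightarrow> z0"
  have FX: "filterlim X (at z0 within S) sequentially"
    using XS X by (auto simp: filterlim_at)
  from filterlim_iff[THEN iffD1, OF FX, rule_format, OF bound]
  obtain N where N: "\<And>n. N \<le> n \<Longrightarrow> AE x in M. norm (s (X n) x) \<le> w x"
    by (auto simp: eventually_sequentially)
  show "((\<lambda>z. integral\<^sup>L M (s z)) \<circ> X) \<longlonglongrightarrow> integral\<^sup>L M f"
    unfolding comp_def
  proof (rule LIMSEQ_offset[where k=N], rule integral_dominated_convergence)
    show "AE x in M. norm (s (X (n + N)) x) \<le> w x" for n
      by (rule N) auto
    show "AE x in M. (\<lambda>n. s (X (n + N)) x) \<longlonglongrightarrow> f x"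
    proof (rule AE_I2)
      fix x assume x: "x \<in> space M"
      have "filterlim (\<lambda>n. X (n + N)) (at z0 within S) sequentially"
        using FX by (rule filterlim_compose[OF _ filterlim_add_const_nat_at_top])
      then show "(\<lambda>n. s (X (n + N)) x) \<longlonglongrightarrow> f x"
        using lim[OF x] by (rule filterlim_compose[of "\<lambda>z. s z x", rotated])
    qed
  qed (use assms in auto)
qed

lemma xexp_bound:
  fixes r a :: real
  assumes "r \<ge> 0" "a > 0"
  shows "r * exp (- a * r) \<le> (2 / a) * exp (- (a/2) * r)"
proof -
  have "a * r / 2 \<le> exp (a * r / 2)"
    using exp_ge_add_one_self[of "a * r / 2"] by linarith
  then have "r \<le> (2 / a) * exp (a * r / 2)" using assms by (simp add: field_simps)
  then have "r * exp (- a * r) \<le> (2 / a) * exp (a * r / 2) * exp (- a * r)"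
    by (intro mult_right_mono) auto
  also have "\<dots> = (2 / a) * exp (- (a/2) * r)"
    by (simp add: mult.assoc exp_add[symmetric])
  finally show ?thesis .
qed

lemma exp_lin_bound:
  fixes z z0 :: complex and r a :: real
  assumes r: "r \<ge> 0" and a: "a > 0" and z0: "Re z0 > 2 * a" and z: "z \<in> ball z0 a"
  shows "norm (exp (- z * of_real r) - exp (- z0 * of_real r)) \<le> (r * exp (- a * r)) * norm (z - z0)"
proof (rule field_differentiable_bound[of "ball z0 a" "\<lambda>w. exp (- w * of_real r)" "\<lambda>w. - of_real r * exp (- w * of_real r)"])
  show "convex (ball z0 a)" by simp
  show "((\<lambda>w. exp (- w * of_real r)) has_field_derivative - of_real r * exp (- w * of_real r)) (at w within ball z0 a)" for w
    by (auto intro!: derivative_eq_intros)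
  show "norm (- of_real r * exp (- w * of_real r)) \<le> r * exp (- a * r)" if w: "w \<in> ball z0 a" for w
  proof -
    have "norm (z0 - w) < a" using w by (simp add: dist_norm)
    then have "\<bar>Re z0 - Re w\<bar> < a" using abs_Re_le_cmod[of "z0 - w"] by simp
    then have "Re w \<ge> a" using z0 by linarith
    have "norm (- of_real r * exp (- w * of_real r)) = r * exp (- Re w * r)"
      using r by (simp add: norm_mult)
    also have "\<dots> \<le> r * exp (- a * r)"
      using r \<open>Re w \<ge> a\<close> by (intro mult_left_mono) (auto intro: mult_right_mono)
    finally show ?thesis .
  qed
qed (use z a in auto)


lemma holo_laplace:
  fixes K r :: "'a::euclidean_space \<Rightarrow> real"
  assumes Km[measurable]: "K \<in> borel_measurable borel" and rm[measurable]: "r \<in> borel_measurable borel"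
    and r0: "\<And>y. r y \<ge> 0"
    and int: "\<And>c. c > 0 \<Longrightarrow> integrable lborel (\<lambda>y. K y * exp (- c * r y))"
  shows "(\<lambda>z. \<integral>y. of_real (K y) * exp (- z * of_real (r y)) \<partial>lborel) holomorphic_on {z. Re z > 0}"
proof -
  define \<Phi> where "\<Phi> (z::complex) = (\<integral>y. of_real (K y) * exp (- z * of_real (r y)) \<partial>lborel)" for z
  have nrm: "norm (of_real (K y) * exp (- z * of_real (r y))) = norm (K y * exp (- Re z * r y))" for z y
    by (simp add: norm_mult abs_mult)
  have cint: "integrable lborel (\<lambda>y. of_real (K y) * exp (- z * of_real (r y)))" if z: "Re z > 0" for z
  proof (rule Bochner_Integration.integrable_bound[OF int[OF z]])
    show "AE y in lborel. norm (of_real (K y) * exp (- z * of_real (r y))) \<le> norm (K y * exp (- Re z * r y))"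
      by (intro AE_I2) (simp add: norm_mult abs_mult norm_exp_eq_Re)
  qed measurable
  have wint: "integrable lborel (\<lambda>y. \<bar>K y\<bar> * (r y * exp (- a * r y)))" if a: "a > 0" for a
  proof -
    have "integrable lborel (\<lambda>y. (2 / a) * \<bar>K y * exp (- (a/2) * r y)\<bar>)"
      using int[of "a/2"] a by auto
    then show ?thesis
    proof (rule Bochner_Integration.integrable_bound)
      show "AE y in lborel. norm (\<bar>K y\<bar> * (r y * exp (- a * r y))) \<le> norm ((2 / a) * \<bar>K y * exp (- (a/2) * r y)\<bar>)"
      proof (rule AE_I2)
        fix y
        have "\<bar>K y\<bar> * (r y * exp (- a * r y)) \<le> \<bar>K y\<bar> * ((2 / a) * exp (- (a/2) * r y))"
          using xexp_bound[OF r0 a] by (intro mult_left_mono) auto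
        then show "norm (\<bar>K y\<bar> * (r y * exp (- a * r y))) \<le> norm ((2 / a) * \<bar>K y * exp (- (a/2) * r y)\<bar>)"
          using r0[of y] a by (simp add: abs_mult mult_ac)
      qed
    qed measurable
  qed
  have deriv: "(\<Phi> has_field_derivative (\<integral>y. of_real (K y) * (- of_real (r y) * exp (- z0 * of_real (r y))) \<partial>lborel)) (at z0)"
    if z0: "Re z0 > 0" for z0
  proof -
    define a where "a = Re z0 / 3"
    have a: "a > 0" "Re z0 > 2 * a" using z0 by (auto simp: a_def)
    define Q where "Q z y = of_real (K y) * ((exp (- z * of_real (r y)) - exp (- z0 * of_real (r y))) / (z - z0))" for z y
    define D where "D y = of_real (K y) * (- of_real (r y) * exp (- z0 * of_real (r y)))" for y
    have ball_re: "Re z > 0" if "z \<in> ball z0 a" for z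
    proof -
      have "norm (z0 - z) < a" using that by (simp add: dist_norm)
      then have "\<bar>Re z0 - Re z\<bar> < a" using abs_Re_le_cmod[of "z0 - z"] by simp
      then show ?thesis using a by linarith
    qed
    have ev_ball: "eventually (\<lambda>z. z \<in> ball z0 a) (at z0)"
      using a(1) by (intro eventually_at_in_open') auto
    have lim: "((\<lambda>z. \<integral>y. Q z y \<partial>lborel) \<longlongrightarrow> (\<integral>y. D y \<partial>lborel)) (at z0)"
    proof (rule dominated_at[where w="\<lambda>y. \<bar>K y\<bar> * (r y * exp (- a * r y))"])
      show "D \<in> borel_measurable lborel" unfolding D_def by measurable
      show "Q z \<in> borel_measurable lborel" for z unfolding Q_def by measurable
      show "integrable lborel (\<lambda>y. \<bar>K y\<bar> * (r y * exp (- a * r y)))" by (rule wint[OF a(1)])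
      show "((\<lambda>z. Q z y) \<longlongrightarrow> D y) (at z0)" for y
      proof -
        have "((\<lambda>w. exp (- w * of_real (r y))) has_field_derivative - of_real (r y) * exp (- z0 * of_real (r y))) (at z0)"
          by (auto intro!: derivative_eq_intros)
        then have "((\<lambda>w. (exp (- w * of_real (r y)) - exp (- z0 * of_real (r y))) / (w - z0)) \<longlongrightarrow> - of_real (r y) * exp (- z0 * of_real (r y))) (at z0)"
          by (simp add: has_field_derivative_iff)
        then show ?thesis unfolding Q_def D_def by (intro tendsto_mult_left)
      qed
      show "eventually (\<lambda>z. AE y in lborel. norm (Q z y) \<le> \<bar>K y\<bar> * (r y * exp (- a * r y))) (at z0)"
        using ev_ball eventually_at_filter
      proof -
        have "eventually (\<lambda>z. z \<noteq> z0) (at z0)" by (simp add: eventually_at_filter)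
        with ev_ball show ?thesis
        proof eventually_elim
          case (elim z)
          show ?case
          proof (rule AE_I2)
            fix y
            have b: "norm (exp (- z * of_real (r y)) - exp (- z0 * of_real (r y))) \<le> (r y * exp (- a * r y)) * norm (z - z0)"
              by (rule exp_lin_bound[OF r0 a(1) a(2) elim(1)])
            have nz: "norm (z - z0) > 0" using elim(2) by simp
            have "norm (Q z y) = \<bar>K y\<bar> * (norm (exp (- z * of_real (r y)) - exp (- z0 * of_real (r y))) / norm (z - z0))"
              unfolding Q_def by (simp add: norm_mult norm_divide)
            also have "\<dots> \<le> \<bar>K y\<bar> * (r y * exp (- a * r y))"
              using b nz by (intro mult_left_mono) (auto simp: divide_le_eq)
            finally show "norm (Q z y) \<le> \<bar>K y\<bar> * (r y * exp (- a * r y))" .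
          qed
        qed
      qed
    qed
    have eqQ: "eventually (\<lambda>z. (\<integral>y. Q z y \<partial>lborel) = (\<Phi> z - \<Phi> z0) / (z - z0)) (at z0)"
      using ev_ball
    proof eventually_elim
      case (elim z)
      have iz: "integrable lborel (\<lambda>y. of_real (K y) * exp (- z * of_real (r y)))"
        by (rule cint[OF ball_re[OF elim]])
      have iz0: "integrable lborel (\<lambda>y. of_real (K y) * exp (- z0 * of_real (r y)))"
        by (rule cint[OF z0])
      have "(\<integral>y. Q z y \<partial>lborel) = (\<integral>y. (of_real (K y) * exp (- z * of_real (r y)) - of_real (K y) * exp (- z0 * of_real (r y))) / (z - z0) \<partial>lborel)"
        unfolding Q_def by (intro Bochner_Integration.integral_cong) (auto simp: algebra_simps diff_divide_distrib)
      also have "\<dots> = (\<integral>y. (of_real (K y) * exp (- z * of_real (r y)) - of_real (K y) * exp (- z0 * of_real (r y))) \<partial>lborel) / (z - z0)"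
        by (rule integral_divide_zero)
      also have "\<dots> = (\<Phi> z - \<Phi> z0) / (z - z0)"
        unfolding \<Phi>_def using iz iz0 by (subst Bochner_Integration.integral_diff) auto
      finally show ?case .
    qed
    have "((\<lambda>z. (\<Phi> z - \<Phi> z0) / (z - z0)) \<longlongrightarrow> (\<integral>y. D y \<partial>lborel)) (at z0)"
      using lim tendsto_cong[OF eqQ] by blast
    then show ?thesis unfolding D_def by (simp add: has_field_derivative_iff)
  qed
  show ?thesis
    unfolding holomorphic_on_def \<Phi>_def[symmetric]
  proof
    fix z0 assume "z0 \<in> {z. Re z > 0}"
    then have "Re z0 > 0" by simp
    from deriv[OF this] show "\<Phi> field_differentiable at z0 within {z. Re z > 0}"
      unfolding field_differentiable_def by (blast intro: has_field_derivative_at_within)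
  qed
qed


lemma islimpt_of_real_interval:
  assumes "a < b"
  shows "(of_real ((a + b) / 2) :: complex) islimpt (of_real ` {a<..<b})"
proof (rule islimpt_approachable[THEN iffD2], intro allI impI)
  fix e :: real assume e: "e > 0"
  define c where "c = (a + b) / 2"
  define x where "x = c + min (e / 2) ((b - a) / 4)"
  have "x \<in> {a<..<b}" using assms e by (auto simp: x_def c_def min_def field_simps)
  moreover have "x \<noteq> c" using assms e by (auto simp: x_def min_def)
  moreover have "dist x c < e" using assms e by (auto simp: x_def dist_real_def min_def)
  ultimately have xs: "(of_real x :: complex) \<in> of_real ` {a<..<b}" and xn: "(of_real x :: complex) \<noteq> of_real c"
    and xd: "dist (of_real x :: complex) (of_real c) < e"
    by (blast, simp, subst dist_of_real, simp)
  show "\<exists>x'\<in>(of_real ` {a<..<b} :: complex set). x' \<noteq> of_real ((a + b) / 2) \<and> dist x' (of_real ((a + b) / 2)) < e"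
    unfolding c_def[symmetric] using xs xn xd by blast
qed

lemma laplace_zero:
  fixes K r :: "'a::euclidean_space \<Rightarrow> real"
  assumes Km[measurable]: "K \<in> borel_measurable borel" and rm[measurable]: "r \<in> borel_measurable borel"
    and r0: "\<And>y. r y \<ge> 0"
    and int: "\<And>c. c > 0 \<Longrightarrow> integrable lborel (\<lambda>y. K y * exp (- c * r y))"
    and ab: "0 < a" "a < b"
    and zero: "\<And>x. a < x \<Longrightarrow> x < b \<Longrightarrow> (\<integral>y. K y * exp (- x * r y) \<partial>lborel) = 0"
    and x: "x > 0"
  shows "(\<integral>y. K y * exp (- x * r y) \<partial>lborel) = 0"
proof -
  define \<Phi> where "\<Phi> (z::complex) = (\<integral>y. of_real (K y) * exp (- z * of_real (r y)) \<partial>lborel)" for z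
  have re: "\<Phi> (of_real t) = of_real (\<integral>y. K y * exp (- t * r y) \<partial>lborel)" for t
  proof -
    have "\<Phi> (of_real t) = (\<integral>y. complex_of_real (K y * exp (- t * r y)) \<partial>lborel)"
      unfolding \<Phi>_def by (intro Bochner_Integration.integral_cong) (auto simp: exp_of_real[symmetric])
    then show ?thesis by (simp only: integral_complex_of_real)
  qed
  have "\<Phi> (of_real x) = 0"
  proof (rule analytic_continuation[of \<Phi> "{z. Re z > 0}" "of_real ` {a<..<b}" "of_real ((a + b) / 2)"])
    show "\<Phi> holomorphic_on {z. 0 < Re z}"
      unfolding \<Phi>_def by (rule holo_laplace[OF Km rm r0 int])
    show "open {z. 0 < Re z}" by (simp add: open_halfspace_Re_gt)
    show "connected {z. 0 < Re z}" by (simp add: convex_connected convex_halfspace_Re_gt)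
    show "of_real ` {a<..<b} \<subseteq> {z. 0 < Re z}" using ab by auto
    show "of_real ((a + b) / 2) \<in> {z. 0 < Re z}" using ab by auto
    show "(of_real ((a + b) / 2) :: complex) islimpt (of_real ` {a<..<b})" by (rule islimpt_of_real_interval[OF ab(2)])
    show "\<Phi> z = 0" if "z \<in> of_real ` {a<..<b}" for z
      using that zero by (auto simp: re)
    show "of_real x \<in> {z. 0 < Re z}" using x by simp
  qed
  then show ?thesis by (simp add: re)
qed


lemma psi_exp: "psi t x = (2*pi*t) powr (- real DIM('a) / 2) * exp (- (1 / (2*t)) * (norm (x::'a::euclidean_space))\<^sup>2)"
  by (simp add: psi_def)

lemma abs_psi: "t > 0 \<Longrightarrow> \<bar>psi t x\<bar> = psi t x"
  by (rule abs_of_nonneg[OF psi_nonneg])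

lemma conv_psi_integrable:
  fixes K :: "'a::euclidean_space \<Rightarrow> real"
  assumes gi: "\<And>c v. c > 0 \<Longrightarrow> integrable lborel (\<lambda>y. K y * exp (- c * (norm (v - y))\<^sup>2))"
    and t: "t > 0"
  shows "integrable lborel (\<lambda>y. K y * psi t (v - y))"
proof -
  have "integrable lborel (\<lambda>y. (2*pi*t) powr (- real DIM('a) / 2) * (K y * exp (- (1 / (2*t)) * (norm (v - y))\<^sup>2)))"
    using gi[of "1 / (2*t)" v] t by auto
  then show ?thesis by (simp add: psi_exp mult_ac)
qed

lemma heat_core:
  fixes K :: "'a::euclidean_space \<Rightarrow> real"
  assumes Km[measurable]: "K \<in> borel_measurable borel"
    and gi: "\<And>c v. c > 0 \<Longrightarrow> integrable lborel (\<lambda>y. K y * exp (- c * (norm (v - y))\<^sup>2))"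
    and e: "\<epsilon> > 0"
    and z: "\<And>v. (\<integral>y. K y * psi \<epsilon> (v - y) \<partial>lborel) = 0"
    and t: "t > 0"
  shows "(\<integral>y. K y * psi t (v - y) \<partial>lborel) = 0"
proof -
  have giabs: "integrable lborel (\<lambda>y. \<bar>K y\<bar> * psi t (v - y))" if "t > 0" for t v
  proof -
    have "integrable lborel (\<lambda>y. \<bar>K y * psi t (v - y)\<bar>)"
      using conv_psi_integrable[OF gi that] by auto
    moreover have "\<And>x::'a. \<bar>psi t x\<bar> = psi t x" by (rule abs_of_nonneg[OF psi_nonneg[OF that]])
    ultimately show ?thesis by (simp add: abs_mult)
  qed
  have stepa: "(\<integral>y. K y * psi (s + \<epsilon>) (v - y) \<partial>lborel) = 0" if s: "s > 0" for s v
  proof -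
    define F where "F y w = K y * (psi s (v - w) * psi \<epsilon> (w - y))" for y w :: 'a
    have Fm: "(\<lambda>(y, w). F y w) \<in> borel_measurable (lborel \<Otimes>\<^sub>M lborel)"
      unfolding F_def by measurable
    have inner1: "(\<integral>w. F y w \<partial>lborel) = K y * psi (s + \<epsilon>) (v - y)" for y
      unfolding F_def using psi_semigroup(2)[OF s e, of v y] by simp
    have inner1n: "(\<integral>w. \<bar>F y w\<bar> \<partial>lborel) = \<bar>K y\<bar> * psi (s + \<epsilon>) (v - y)" for y
    proof -
      have "(\<integral>w. \<bar>F y w\<bar> \<partial>lborel) = (\<integral>w. \<bar>K y\<bar> * (psi s (v - w) * psi \<epsilon> (w - y)) \<partial>lborel)"
        unfolding F_def
        by (intro Bochner_Integration.integral_cong) (auto simp: abs_mult abs_psi[OF s] abs_psi[OF e])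
      then show ?thesis using psi_semigroup(2)[OF s e, of v y] by simp
    qed
    have int: "integrable (lborel \<Otimes>\<^sub>M lborel) (\<lambda>(y, w). F y w)"
    proof (rule lborel_pair.Fubini_integrable)
      show "integrable lborel (\<lambda>y. \<integral>w. norm (case (y, w) of (y, w) \<Rightarrow> F y w) \<partial>lborel)"
        using giabs[of "s + \<epsilon>" v] s e by (simp add: inner1n)
      show "AE y in lborel. integrable lborel (\<lambda>w. case (y, w) of (y, w) \<Rightarrow> F y w)"
        unfolding F_def using psi_semigroup(1)[OF s e] by auto
    qed (rule Fm)
    have "(\<integral>y. K y * psi (s + \<epsilon>) (v - y) \<partial>lborel) = (\<integral>y. (\<integral>w. F y w \<partial>lborel) \<partial>lborel)"
      by (simp add: inner1)
    also have "\<dots> = (\<integral>w. (\<integral>y. F y w \<partial>lborel) \<partial>lborel)"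
      using lborel_pair.Fubini_integral[OF int] by simp
    also have "\<dots> = (\<integral>w. psi s (v - w) * (\<integral>y. K y * psi \<epsilon> (w - y) \<partial>lborel) \<partial>lborel)"
    proof (intro Bochner_Integration.integral_cong refl)
      fix w
      have "(\<integral>y. F y w \<partial>lborel) = (\<integral>y. psi s (v - w) * (K y * psi \<epsilon> (w - y)) \<partial>lborel)"
        unfolding F_def by (intro Bochner_Integration.integral_cong refl) (simp add: mult_ac)
      also have "\<dots> = psi s (v - w) * (\<integral>y. K y * psi \<epsilon> (w - y) \<partial>lborel)"
        by (rule integral_mult_right_zero)
      finally show "(\<integral>y. F y w \<partial>lborel) = psi s (v - w) * (\<integral>y. K y * psi \<epsilon> (w - y) \<partial>lborel)" .
    qed
    also have "\<dots> = 0" by (simp add: z)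
    finally show ?thesis .
  qed
  define r where "r y = (norm (v - y))\<^sup>2" for y
  have rel: "(\<integral>y. K y * exp (- (1 / (2*t)) * r y) \<partial>lborel) = (2*pi*t) powr (real DIM('a) / 2) * (\<integral>y. K y * psi t (v - y) \<partial>lborel)"
    if t: "t > 0" for t
  proof -
    have "(\<integral>y. K y * psi t (v - y) \<partial>lborel) = (\<integral>y. (2*pi*t) powr (- real DIM('a) / 2) * (K y * exp (- (1 / (2*t)) * r y)) \<partial>lborel)"
      unfolding psi_exp r_def by (intro Bochner_Integration.integral_cong refl) (simp add: mult_ac)
    also have "\<dots> = (2*pi*t) powr (- real DIM('a) / 2) * (\<integral>y. K y * exp (- (1 / (2*t)) * r y) \<partial>lborel)"
      by (rule integral_mult_right_zero)
    finally have "(\<integral>y. K y * psi t (v - y) \<partial>lborel) = (2*pi*t) powr (- real DIM('a) / 2) * (\<integral>y. K y * exp (- (1 / (2*t)) * r y) \<partial>lborel)" .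
    moreover have "(2*pi*t) powr (real DIM('a) / 2) * (2*pi*t) powr (- real DIM('a) / 2) = 1"
      using t by (simp add: powr_add[symmetric])
    ultimately show ?thesis by (metis (no_types, lifting) mult.assoc mult_1)
  qed
  have "(\<integral>y. K y * exp (- (1 / (2*t)) * r y) \<partial>lborel) = 0"
  proof (rule laplace_zero[where a="1 / (4*\<epsilon>)" and b="1 / (2*\<epsilon>)"])
    show "r \<in> borel_measurable borel" unfolding r_def by measurable
    show "0 \<le> r y" for y unfolding r_def by simp
    show "integrable lborel (\<lambda>y. K y * exp (- c * r y))" if "c > 0" for c
      unfolding r_def by (rule gi[OF that])
    show "0 < 1 / (4*\<epsilon>)" "1 / (4*\<epsilon>) < 1 / (2*\<epsilon>)" using e by (auto simp: field_simps)
    show "0 < 1 / (2*t)" using t by simp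
    show "(\<integral>y. K y * exp (- x * r y) \<partial>lborel) = 0" if x: "1 / (4*\<epsilon>) < x" "x < 1 / (2*\<epsilon>)" for x
    proof -
      define tt where "tt = 1 / (2*x)"
      have xpos: "x > 0" using x e by (smt (verit) divide_pos_pos)
      have "tt > \<epsilon>" using x xpos e unfolding tt_def by (auto simp: field_simps)
      have x_eq: "x = 1 / (2*tt)" using xpos unfolding tt_def by simp
      have "(\<integral>y. K y * psi tt (v - y) \<partial>lborel) = 0"
        using stepa[of "tt - \<epsilon>" v] \<open>tt > \<epsilon>\<close> by simp
      then show ?thesis using rel[of tt] \<open>tt > \<epsilon>\<close> e unfolding x_eq by simp
    qed
  qed (rule Km)
  then show ?thesis using rel[OF t] t by simp
qed


lemma psi_scale:
  assumes t: "t > 0"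
  shows "(sqrt t)^DIM('a) * psi t (sqrt t *\<^sub>R x) = psi 1 (x::'a::euclidean_space)"
proof -
  have n: "(norm (sqrt t *\<^sub>R x))\<^sup>2 / (2 * t) = (norm x)\<^sup>2 / 2"
    using t by (simp add: power_mult_distrib)
  have "(sqrt t)^DIM('a) = t powr (real DIM('a) / 2)"
    using t by (simp add: sqrt_def root_powr_inverse powr_realpow[symmetric] powr_powr)
  moreover have "(2 * pi * t) powr (- real DIM('a) / 2) = (2 * pi) powr (- real DIM('a) / 2) * t powr (- real DIM('a) / 2)"
    using t by (simp add: powr_mult)
  moreover have "t powr (real DIM('a) / 2) * t powr (- real DIM('a) / 2) = 1"
    using t by (simp add: powr_add[symmetric])
  ultimately have "(sqrt t)^DIM('a) * (2 * pi * t) powr (- real DIM('a) / 2) = (2 * pi) powr (- real DIM('a) / 2)"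
    by (metis (no_types, lifting) mult.assoc mult.left_commute mult_1_right)
  then show ?thesis using t unfolding psi_def by (simp add: mult.assoc[symmetric] power_mult_distrib)
qed

lemma psi_shift_integrable:
  assumes t: "t > 0"
  shows "integrable lborel (\<lambda>y. psi t (y - v) * (1 + (norm (y::'a::euclidean_space))\<^sup>2))"
proof -
  have i1: "integrable lborel (\<lambda>y. psi t (y - v))" by (rule psi_integral(1)[OF t])
  have "integrable lborel (\<lambda>x. psi t x * (norm (x::'a))\<^sup>2)" by (rule psi_moment2(1)[OF t])
  then have i2: "integrable lborel (\<lambda>y. psi t (y - v) * (norm (y - v))\<^sup>2)"
    using lborel_integral_affine(1)[of "\<lambda>y. psi t (y - v) * (norm (y - v))\<^sup>2" 1 v] by simp
  have "integrable lborel (\<lambda>y. (1 + 2 * (norm v)\<^sup>2) * psi t (y - v) + 2 * (psi t (y - v) * (norm (y - v))\<^sup>2))"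
    using i1 i2 by auto
  then show ?thesis
  proof (rule Bochner_Integration.integrable_bound)
    show "AE y in lborel. norm (psi t (y - v) * (1 + (norm y)\<^sup>2)) \<le>
        norm ((1 + 2 * (norm v)\<^sup>2) * psi t (y - v) + 2 * (psi t (y - v) * (norm (y - v))\<^sup>2))"
    proof (rule AE_I2)
      fix y :: 'a
      have p: "psi t (y - v) \<ge> 0" by (rule psi_nonneg[OF t])
      have "norm y \<le> norm v + norm (y - v)" using norm_triangle_ineq[of v "y - v"] by simp
      then have "(norm y)\<^sup>2 \<le> (norm v + norm (y - v))\<^sup>2" by (intro power_mono) auto
      also have "\<dots> \<le> 2 * (norm v)\<^sup>2 + 2 * (norm (y - v))\<^sup>2"
        by (smt (verit) sum_squares_bound power2_sum)
      finally have "psi t (y - v) * (1 + (norm y)\<^sup>2) \<le> psi t (y - v) * (1 + 2 * (norm v)\<^sup>2 + 2 * (norm (y - v))\<^sup>2)"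
        using p by (intro mult_left_mono) auto
      then show "norm (psi t (y - v) * (1 + (norm y)\<^sup>2)) \<le>
        norm ((1 + 2 * (norm v)\<^sup>2) * psi t (y - v) + 2 * (psi t (y - v) * (norm (y - v))\<^sup>2))"
        using p by (simp add: algebra_simps)
    qed
  qed measurable
qed

lemma approx_identity:
  fixes \<phi> :: "'a::euclidean_space \<Rightarrow> real"
  assumes cont: "continuous_on UNIV \<phi>"
    and bnd: "\<And>y. \<bar>\<phi> y\<bar> \<le> C * (1 + (norm y)\<^sup>2)"
  shows "(\<lambda>n. \<integral>y. \<phi> y * psi (1 / Suc n) (v - y) \<partial>lborel) \<longlonglongrightarrow> \<phi> v"
proof -
  have [measurable]: "\<phi> \<in> borel_measurable borel" by (rule borel_measurable_continuous_onI[OF cont])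
  define t where "t n = 1 / real (Suc n)" for n
  have tpos: "t n > 0" for n by (simp add: t_def)
  have tle: "t n \<le> 1" for n by (simp add: t_def)
  have eq: "(\<integral>y. \<phi> y * psi (t n) (v - y) \<partial>lborel) = (\<integral>x. \<phi> (v + sqrt (t n) *\<^sub>R x) * psi 1 x \<partial>lborel)" for n
  proof -
    have "(\<integral>y. \<phi> y * psi (t n) (v - y) \<partial>lborel) =
        \<bar>sqrt (t n)\<bar>^DIM('a) * (\<integral>x. \<phi> (v + sqrt (t n) *\<^sub>R x) * psi (t n) (v - (v + sqrt (t n) *\<^sub>R x)) \<partial>lborel)"
      by (rule lborel_integral_affine(2)) (use tpos[of n] in auto)
    also have "\<dots> = (\<integral>x. \<phi> (v + sqrt (t n) *\<^sub>R x) * ((sqrt (t n))^DIM('a) * psi (t n) (sqrt (t n) *\<^sub>R x)) \<partial>lborel)"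
      using tpos[of n] by (simp add: psi_minus mult_ac integral_mult_right_zero[symmetric] del: integral_mult_right_zero)
    also have "\<dots> = (\<integral>x. \<phi> (v + sqrt (t n) *\<^sub>R x) * psi 1 x \<partial>lborel)"
      by (simp add: psi_scale[OF tpos])
    finally show ?thesis .
  qed
  define g where "g n x = \<phi> (v + sqrt (t n) *\<^sub>R x) * psi 1 x" for n x
  define g0 where "g0 (x::'a) = \<phi> v * psi 1 x" for x
  define w where "w x = C * (1 + 2 * (norm v)\<^sup>2) * psi 1 x + 2 * C * (psi 1 x * (norm (x::'a))\<^sup>2)" for x
  have "(\<lambda>n. \<integral>x. g n x \<partial>lborel) \<longlonglongrightarrow> (\<integral>x. g0 x \<partial>lborel)"
  proof (rule Bochner_Integration.integral_dominated_convergence[where w=w])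
    show "integrable lborel w"
      using psi_integral0(1)[of 1] psi_moment2(1)[of 1] unfolding w_def by auto
    show "g0 \<in> borel_measurable lborel" unfolding g0_def by measurable
    show "g n \<in> borel_measurable lborel" for n unfolding g_def by measurable
    show "AE x in lborel. (\<lambda>n. g n x) \<longlonglongrightarrow> g0 x"
      unfolding g_def g0_def
    proof (rule AE_I2)
      fix x :: 'a
      have "t \<longlonglongrightarrow> 0" unfolding t_def by (rule LIMSEQ_inverse_real_of_nat[unfolded inverse_eq_divide])
      then have "(\<lambda>n. sqrt (t n)) \<longlonglongrightarrow> 0" using tendsto_real_sqrt by fastforce
      then have "(\<lambda>n. v + sqrt (t n) *\<^sub>R x) \<longlonglongrightarrow> v + 0 *\<^sub>R x" by (intro tendsto_intros)
      then have "(\<lambda>n. \<phi> (v + sqrt (t n) *\<^sub>R x)) \<longlonglongrightarrow> \<phi> v"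
        using cont by (simp add: continuous_on_tendsto_compose[OF cont])
      then show "(\<lambda>n. \<phi> (v + sqrt (t n) *\<^sub>R x) * psi 1 x) \<longlonglongrightarrow> \<phi> v * psi 1 x"
        by (intro tendsto_intros)
    qed
    show "AE x in lborel. norm (g n x) \<le> w x" for n
      unfolding g_def w_def
    proof (rule AE_I2)
      fix x :: 'a
      have p: "psi 1 x \<ge> 0" by (rule psi_nonneg) simp
      have C: "C \<ge> 0" using bnd[of 0] by simp
      have "norm (v + sqrt (t n) *\<^sub>R x) \<le> norm v + norm x"
      proof -
        have "norm (sqrt (t n) *\<^sub>R x) \<le> norm x"
          using tle[of n] tpos[of n] by (simp add: mult_left_le_one_le real_sqrt_le_1_iff)
        then show ?thesis by (meson add_left_mono norm_triangle_ineq order_trans)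
      qed
      then have "(norm (v + sqrt (t n) *\<^sub>R x))\<^sup>2 \<le> (norm v + norm x)\<^sup>2" by (intro power_mono) auto
      also have "\<dots> \<le> 2 * (norm v)\<^sup>2 + 2 * (norm x)\<^sup>2"
        by (smt (verit) sum_squares_bound power2_sum)
      finally have "\<bar>\<phi> (v + sqrt (t n) *\<^sub>R x)\<bar> \<le> C * (1 + 2 * (norm v)\<^sup>2 + 2 * (norm x)\<^sup>2)"
        using bnd[of "v + sqrt (t n) *\<^sub>R x"] C by (smt (verit) mult_left_mono)
      then have "\<bar>\<phi> (v + sqrt (t n) *\<^sub>R x)\<bar> * psi 1 x \<le> C * (1 + 2 * (norm v)\<^sup>2 + 2 * (norm x)\<^sup>2) * psi 1 x"
        using p by (intro mult_right_mono) auto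
      then show "norm (\<phi> (v + sqrt (t n) *\<^sub>R x) * psi 1 x) \<le> C * (1 + 2 * (norm v)\<^sup>2) * psi 1 x + 2 * C * (psi 1 x * (norm x)\<^sup>2)"
        using p by (simp add: abs_mult algebra_simps)
    qed
  qed
  moreover have "(\<integral>x. g0 x \<partial>lborel) = \<phi> v"
  proof -
    have "(\<integral>x. psi 1 (x::'a) \<partial>lborel) = 1" by (rule psi_integral0(2)) simp
    then show ?thesis unfolding g0_def by simp
  qed
  ultimately show ?thesis unfolding t_def[symmetric] eq g_def by simp
qed


lemma exp_psi:
  assumes c: "c > 0"
  shows "exp (- c * (norm (v - y))\<^sup>2) = (2*pi*(1/(2*c))) powr (real DIM('a) / 2) * psi (1/(2*c)) (y - v::'a::euclidean_space)"
proof -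
  have "psi (1/(2*c)) (y - v) = (2*pi*(1/(2*c))) powr (- real DIM('a) / 2) * exp (- c * (norm (v - y))\<^sup>2)"
    using c by (simp add: psi_exp norm_minus_commute)
  moreover have "(2*pi*(1/(2*c))) powr (real DIM('a) / 2) * (2*pi*(1/(2*c))) powr (- real DIM('a) / 2) = 1"
    using c by (simp add: powr_add[symmetric])
  ultimately show ?thesis by (metis (no_types, lifting) mult.assoc mult_1)
qed

lemma heat_unique_cont:
  fixes K :: "'a::euclidean_space \<Rightarrow> real"
  assumes cont: "continuous_on UNIV K"
    and bnd: "\<And>y. \<bar>K y\<bar> \<le> C * (1 + (norm y)\<^sup>2)"
    and e: "\<epsilon> > 0"
    and z: "\<And>v. (\<integral>y. K y * psi \<epsilon> (v - y) \<partial>lborel) = 0"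
  shows "K v = 0"
proof -
  have Km[measurable]: "K \<in> borel_measurable borel" by (rule borel_measurable_continuous_onI[OF cont])
  have C: "C \<ge> 0" using bnd[of 0] by simp
  have gi: "integrable lborel (\<lambda>y. K y * exp (- c * (norm (v - y))\<^sup>2))" if c: "c > 0" for c v
  proof -
    define t where "t = 1 / (2 * c)"
    have t: "t > 0" using c by (simp add: t_def)
    define A where "A = (2*pi*t) powr (real DIM('a) / 2)"
    have A: "A \<ge> 0" unfolding A_def by simp
    have "integrable lborel (\<lambda>y. C * A * (psi t (y - v) * (1 + (norm y)\<^sup>2)))"
      using psi_shift_integrable[OF t, of v] by simp
    then show ?thesis
    proof (rule Bochner_Integration.integrable_bound)
      show "AE y in lborel. norm (K y * exp (- c * (norm (v - y))\<^sup>2)) \<le> norm (C * A * (psi t (y - v) * (1 + (norm y)\<^sup>2)))"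
      proof (rule AE_I2)
        fix y
        have e: "exp (- c * (norm (v - y))\<^sup>2) = A * psi t (y - v)"
          unfolding A_def t_def by (rule exp_psi[OF c])
        have p: "psi t (y - v) \<ge> 0" by (rule psi_nonneg[OF t])
        have "\<bar>K y\<bar> * (A * psi t (y - v)) \<le> C * (1 + (norm y)\<^sup>2) * (A * psi t (y - v))"
          using bnd[of y] A p by (intro mult_right_mono) auto
        then show "norm (K y * exp (- c * (norm (v - y))\<^sup>2)) \<le> norm (C * A * (psi t (y - v) * (1 + (norm y)\<^sup>2)))"
          using A p C unfolding e by (simp add: abs_mult mult_ac)
      qed
    qed measurable
  qed
  have zero: "(\<integral>y. K y * psi t (v - y) \<partial>lborel) = 0" if "t > 0" for t
    by (rule heat_core[OF Km gi e z that])
  have "(\<lambda>n. \<integral>y. K y * psi (1 / Suc n) (v - y) \<partial>lborel) \<longlonglongrightarrow> K v"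
    by (rule approx_identity[OF cont bnd])
  moreover have "(\<lambda>n. \<integral>y. K y * psi (1 / Suc n) (v - y) \<partial>lborel) = (\<lambda>n. 0)"
    using zero by simp
  ultimately have "(\<lambda>n. 0::real) \<longlonglongrightarrow> K v" by simp
  then show ?thesis by (simp add: LIMSEQ_const_iff)
qed


lemma heat_weak:
  fixes K \<phi> :: "'a::euclidean_space \<Rightarrow> real"
  assumes Ki: "integrable lborel K"
    and zero: "\<And>t v. t > 0 \<Longrightarrow> (\<integral>y. K y * psi t (v - y) \<partial>lborel) = 0"
    and cont: "continuous_on UNIV \<phi>" and bnd: "\<And>y. \<bar>\<phi> y\<bar> \<le> B"
  shows "(\<integral>y. K y * \<phi> y \<partial>lborel) = 0"
proof -
  have Km[measurable]: "K \<in> borel_measurable borel" using Ki by auto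
  have pm[measurable]: "\<phi> \<in> borel_measurable borel" by (rule borel_measurable_continuous_onI[OF cont])
  have B: "B \<ge> 0" using bnd[of 0] by linarith
  define t where "t n = 1 / real (Suc n)" for n
  have tpos: "t n > 0" for n by (simp add: t_def)
  define P where "P n y = (\<integral>v. \<phi> v * psi (t n) (y - v) \<partial>lborel)" for n y
  have pint: "integrable lborel (\<lambda>v. \<phi> v * psi s (y - v))"
    and pabs: "integrable lborel (\<lambda>v. \<bar>\<phi> v\<bar> * psi s (y - v))"
    and pbnd: "(\<integral>v. \<bar>\<phi> v\<bar> * psi s (y - v) \<partial>lborel) \<le> B" if s: "s > 0" for s y
  proof -
    have ps: "integrable lborel (\<lambda>v. psi s (v - y))" by (rule psi_integral(1)[OF s])
    have ps1: "(\<integral>v. psi s (v - y) \<partial>lborel) = 1" by (rule psi_integral(2)[OF s])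
    have bI: "integrable lborel (\<lambda>v. B * psi s (y - v))" using ps by (simp add: psi_commute[of s y])
    show pabs: "integrable lborel (\<lambda>v. \<bar>\<phi> v\<bar> * psi s (y - v))"
      using bI by (rule Bochner_Integration.integrable_bound)
        (auto simp: abs_mult abs_psi[OF s] abs_of_nonneg[OF B] intro!: mult_right_mono psi_nonneg[OF s] bnd)
    show "integrable lborel (\<lambda>v. \<phi> v * psi s (y - v))"
      using bI by (rule Bochner_Integration.integrable_bound)
        (auto simp: abs_mult abs_psi[OF s] abs_of_nonneg[OF B] intro!: mult_right_mono psi_nonneg[OF s] bnd)
    have "(\<integral>v. \<bar>\<phi> v\<bar> * psi s (y - v) \<partial>lborel) \<le> (\<integral>v. B * psi s (y - v) \<partial>lborel)"
      using pabs bI by (rule integral_mono) (auto intro!: mult_right_mono psi_nonneg[OF s] bnd)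
    also have "\<dots> = B" using ps1 by (simp add: psi_commute[of s y])
    finally show "(\<integral>v. \<bar>\<phi> v\<bar> * psi s (y - v) \<partial>lborel) \<le> B" .
  qed
  have Pb: "\<bar>P n y\<bar> \<le> B" for n y
  proof -
    have "\<bar>P n y\<bar> \<le> (\<integral>v. \<bar>\<phi> v\<bar> * psi (t n) (y - v) \<partial>lborel)"
      unfolding P_def using pint[OF tpos] pabs[OF tpos]
      by (intro integral_abs_bound_integral) (auto simp: abs_mult abs_psi[OF tpos])
    also have "\<dots> \<le> B" by (rule pbnd[OF tpos])
    finally show ?thesis .
  qed
  have Plim: "(\<lambda>n. P n y) \<longlonglongrightarrow> \<phi> y" for y
  proof -
    have "(\<lambda>n. \<integral>v. \<phi> v * psi (1 / Suc n) (y - v) \<partial>lborel) \<longlonglongrightarrow> \<phi> y"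
    proof (rule approx_identity[OF cont, of B])
      show "\<bar>\<phi> v\<bar> \<le> B * (1 + (norm v)\<^sup>2)" for v
        using bnd[of v] B by (smt (verit) mult_le_cancel_left1 zero_le_power2)
    qed
    then show ?thesis unfolding P_def t_def .
  qed
  have Pzero: "(\<integral>y. K y * P n y \<partial>lborel) = 0" for n
  proof -
    define F where "F y v = K y * (\<phi> v * psi (t n) (y - v))" for y v :: 'a
    have Fm[measurable]: "(\<lambda>(y, v). F y v) \<in> borel_measurable (lborel \<Otimes>\<^sub>M lborel)"
      unfolding F_def by measurable
    have int: "integrable (lborel \<Otimes>\<^sub>M lborel) (\<lambda>(y, v). F y v)"
    proof (rule lborel_pair.Fubini_integrable)
      have e: "(\<integral>v. \<bar>F y v\<bar> \<partial>lborel) = \<bar>K y\<bar> * (\<integral>v. \<bar>\<phi> v\<bar> * psi (t n) (y - v) \<partial>lborel)" for y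
      proof -
        have "(\<integral>v. \<bar>F y v\<bar> \<partial>lborel) = (\<integral>v. \<bar>K y\<bar> * (\<bar>\<phi> v\<bar> * psi (t n) (y - v)) \<partial>lborel)"
          unfolding F_def by (intro Bochner_Integration.integral_cong) (auto simp: abs_mult abs_psi[OF tpos])
        then show ?thesis by simp
      qed
      have "integrable lborel (\<lambda>y. B * \<bar>K y\<bar>)" using Ki by auto
      then show "integrable lborel (\<lambda>y. \<integral>v. norm (case (y, v) of (y, v) \<Rightarrow> F y v) \<partial>lborel)"
      proof (rule Bochner_Integration.integrable_bound)
        show "(\<lambda>y. \<integral>v. norm (case (y, v) of (y, v) \<Rightarrow> F y v) \<partial>lborel) \<in> borel_measurable lborel"
          unfolding F_def by measurable
        show "AE y in lborel. norm (\<integral>v. norm (case (y, v) of (y, v) \<Rightarrow> F y v) \<partial>lborel) \<le> norm (B * \<bar>K y\<bar>)"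
        proof (rule AE_I2)
          fix y
          have nn: "0 \<le> (\<integral>v. \<bar>\<phi> v\<bar> * psi (t n) (y - v) \<partial>lborel)"
            by (intro integral_nonneg_AE) (auto intro!: mult_nonneg_nonneg psi_nonneg[OF tpos])
          have "\<bar>K y\<bar> * (\<integral>v. \<bar>\<phi> v\<bar> * psi (t n) (y - v) \<partial>lborel) \<le> \<bar>K y\<bar> * B"
            using pbnd[OF tpos] by (intro mult_left_mono) auto
          then show "norm (\<integral>v. norm (case (y, v) of (y, v) \<Rightarrow> F y v) \<partial>lborel) \<le> norm (B * \<bar>K y\<bar>)"
            using nn B by (simp add: e abs_mult mult_ac)
        qed
      qed
      show "AE y in lborel. integrable lborel (\<lambda>v. case (y, v) of (y, v) \<Rightarrow> F y v)"
        unfolding F_def using pint[OF tpos] by auto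
    qed (rule Fm)
    have "(\<integral>y. K y * P n y \<partial>lborel) = (\<integral>y. (\<integral>v. F y v \<partial>lborel) \<partial>lborel)"
      unfolding P_def F_def by simp
    also have "\<dots> = (\<integral>v. (\<integral>y. F y v \<partial>lborel) \<partial>lborel)"
      using lborel_pair.Fubini_integral[OF int] by simp
    also have "\<dots> = (\<integral>v. \<phi> v * (\<integral>y. K y * psi (t n) (v - y) \<partial>lborel) \<partial>lborel)"
    proof (intro Bochner_Integration.integral_cong refl)
      fix v
      have "(\<integral>y. F y v \<partial>lborel) = (\<integral>y. \<phi> v * (K y * psi (t n) (v - y)) \<partial>lborel)"
        unfolding F_def by (intro Bochner_Integration.integral_cong refl) (simp add: mult_ac psi_commute[of _ v])
      also have "\<dots> = \<phi> v * (\<integral>y. K y * psi (t n) (v - y) \<partial>lborel)"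
        by (rule integral_mult_right_zero)
      finally show "(\<integral>y. F y v \<partial>lborel) = \<phi> v * (\<integral>y. K y * psi (t n) (v - y) \<partial>lborel)" .
    qed
    also have "\<dots> = 0" using zero[OF tpos] by simp
    finally show ?thesis .
  qed
  have "(\<lambda>n. \<integral>y. K y * P n y \<partial>lborel) \<longlonglongrightarrow> (\<integral>y. K y * \<phi> y \<partial>lborel)"
  proof (rule Bochner_Integration.integral_dominated_convergence[where w="\<lambda>y. B * \<bar>K y\<bar>"])
    show "(\<lambda>y. K y * \<phi> y) \<in> borel_measurable lborel" by measurable
    show "(\<lambda>y. K y * P n y) \<in> borel_measurable lborel" for n unfolding P_def by measurable
    show "integrable lborel (\<lambda>y. B * \<bar>K y\<bar>)" using Ki by auto
    show "AE y in lborel. (\<lambda>n. K y * P n y) \<longlonglongrightarrow> K y * \<phi> y"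
      using Plim by (auto intro!: tendsto_mult_left)
    show "AE y in lborel. norm (K y * P n y) \<le> B * \<bar>K y\<bar>" for n
    proof (rule AE_I2)
      fix y
      have "\<bar>K y\<bar> * \<bar>P n y\<bar> \<le> \<bar>K y\<bar> * B" using Pb[of n y] by (intro mult_left_mono) auto
      then show "norm (K y * P n y) \<le> B * \<bar>K y\<bar>" by (simp add: abs_mult mult_ac)
    qed
  qed
  then show ?thesis using Pzero by (simp add: LIMSEQ_const_iff)
qed



lemma weak_open:
  fixes K :: "'a::euclidean_space \<Rightarrow> real"
  assumes Ki: "integrable lborel K"
    and weak: "\<And>\<phi>. continuous_on UNIV \<phi> \<Longrightarrow> (\<And>y. \<bar>\<phi> y\<bar> \<le> 1) \<Longrightarrow> (\<integral>y. K y * \<phi> y \<partial>lborel) = 0"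
    and U: "open U"
  shows "(\<integral>y. K y * indicator U y \<partial>lborel) = 0"
proof (cases "U = UNIV")
  case True
  then show ?thesis using weak[of "\<lambda>_. 1"] by simp
next
  case False
  have Km[measurable]: "K \<in> borel_measurable borel" using Ki by auto
  have Um[measurable]: "U \<in> sets borel" using U by simp
  have cl: "closed (- U)" using U by (simp add: closed_Compl)
  have ne: "- U \<noteq> {}" using False by auto
  define \<phi> where "\<phi> n y = min 1 (real n * infdist y (- U))" for n :: nat and y :: 'a
  have pc: "continuous_on UNIV (\<phi> n)" for n
    unfolding \<phi>_def by (intro continuous_intros)
  have pb: "\<bar>\<phi> n y\<bar> \<le> 1" for n y
    unfolding \<phi>_def using infdist_nonneg[of y "- U"] by auto
  have pl: "(\<lambda>n. \<phi> n y) \<longlonglongrightarrow> indicator U y" for y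
  proof (cases "y \<in> U")
    case True
    then have d: "infdist y (- U) > 0" using infdist_pos_not_in_closed[OF cl ne] by auto
    obtain N :: nat where N: "1 / infdist y (- U) < N" using reals_Archimedean2 by blast
    have "eventually (\<lambda>n. \<phi> n y = 1) sequentially"
      unfolding eventually_sequentially
    proof (intro exI allI impI)
      fix n assume "N \<le> n"
      then have "1 / infdist y (- U) < real n" using N by linarith
      then have "1 \<le> real n * infdist y (- U)" using d by (simp add: field_simps)
      then show "\<phi> n y = 1" unfolding \<phi>_def by simp
    qed
    then have "(\<lambda>n. \<phi> n y) \<longlonglongrightarrow> 1" by (rule tendsto_eventually)
    then show ?thesis using True by simp
  next
    case False
    then show ?thesis unfolding \<phi>_def by simp
  qed
  have "(\<lambda>n. \<integral>y. K y * \<phi> n y \<partial>lborel) \<longlonglongrightarrow> (\<integral>y. K y * indicator U y \<partial>lborel)"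
  proof (rule Bochner_Integration.integral_dominated_convergence[where w="\<lambda>y. \<bar>K y\<bar>"])
    show "(\<lambda>y. K y * indicator U y) \<in> borel_measurable lborel" by measurable
    show "(\<lambda>y. K y * \<phi> n y) \<in> borel_measurable lborel" for n
      using borel_measurable_continuous_onI[OF pc[of n]] by measurable
    show "integrable lborel (\<lambda>y. \<bar>K y\<bar>)" using Ki by auto
    show "AE y in lborel. (\<lambda>n. K y * \<phi> n y) \<longlonglongrightarrow> K y * indicator U y"
      using pl by (auto intro!: tendsto_mult_left)
    show "AE y in lborel. norm (K y * \<phi> n y) \<le> \<bar>K y\<bar>" for n
    proof (rule AE_I2)
      fix y
      have "\<bar>K y\<bar> * \<bar>\<phi> n y\<bar> \<le> \<bar>K y\<bar> * 1" using pb[of n y] by (intro mult_left_mono) auto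
      then show "norm (K y * \<phi> n y) \<le> \<bar>K y\<bar>" by (simp add: abs_mult)
    qed
  qed
  moreover have "(\<lambda>n. \<integral>y. K y * \<phi> n y \<partial>lborel) = (\<lambda>n. 0)"
    using weak[OF pc pb] by simp
  ultimately show ?thesis by (simp add: LIMSEQ_const_iff)
qed

lemma AE_zero_from_open:
  fixes K :: "'a::euclidean_space \<Rightarrow> real"
  assumes Ki: "integrable lborel K"
    and op: "\<And>U. open U \<Longrightarrow> (\<integral>y. K y * indicator U y \<partial>lborel) = 0"
  shows "AE y in lborel. K y = 0"
proof -
  have Km[measurable]: "K \<in> borel_measurable borel" using Ki by auto
  define Kp where "Kp y = max (K y) 0" for y
  define Kn where "Kn y = max (- K y) 0" for y
  have Kpm[measurable]: "Kp \<in> borel_measurable borel" unfolding Kp_def by measurable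
  have Knm[measurable]: "Kn \<in> borel_measurable borel" unfolding Kn_def by measurable
  have Kpi: "integrable lborel Kp" unfolding Kp_def using Ki by (intro integrable_max) auto
  have Kni: "integrable lborel Kn" unfolding Kn_def using Ki by (intro integrable_max) auto
  have KpKn: "K y = Kp y - Kn y" for y unfolding Kp_def Kn_def by auto
  have Kpn: "0 \<le> Kp y" "0 \<le> Kn y" for y unfolding Kp_def Kn_def by auto
  have em: "emeasure (density lborel (\<lambda>y. ennreal (Kp y))) U = emeasure (density lborel (\<lambda>y. ennreal (Kn y))) U"
    if U: "open U" for U
  proof -
    have Um[measurable]: "U \<in> sets borel" using U by simp
    have "integrable lborel (\<lambda>y. indicator U y *\<^sub>R Kp y)" by (rule integrable_mult_indicator) (use Kpi in auto)
    then have i1: "integrable lborel (\<lambda>y. Kp y * indicator U y)" by (simp add: mult.commute)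
    have "integrable lborel (\<lambda>y. indicator U y *\<^sub>R Kn y)" by (rule integrable_mult_indicator) (use Kni in auto)
    then have i2: "integrable lborel (\<lambda>y. Kn y * indicator U y)" by (simp add: mult.commute)
    have "(\<integral>y. K y * indicator U y \<partial>lborel) = (\<integral>y. Kp y * indicator U y \<partial>lborel) - (\<integral>y. Kn y * indicator U y \<partial>lborel)"
    proof -
      have "(\<integral>y. K y * indicator U y \<partial>lborel) = (\<integral>y. Kp y * indicator U y - Kn y * indicator U y \<partial>lborel)"
        by (intro Bochner_Integration.integral_cong refl) (simp add: KpKn left_diff_distrib)
      also have "\<dots> = (\<integral>y. Kp y * indicator U y \<partial>lborel) - (\<integral>y. Kn y * indicator U y \<partial>lborel)"
        by (rule Bochner_Integration.integral_diff[OF i1 i2])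
      finally show ?thesis .
    qed
    then have eqI: "(\<integral>y. Kp y * indicator U y \<partial>lborel) = (\<integral>y. Kn y * indicator U y \<partial>lborel)"
      using op[OF U] by simp
    have "emeasure (density lborel (\<lambda>y. ennreal (Kp y))) U = (\<integral>\<^sup>+y. ennreal (Kp y * indicator U y) \<partial>lborel)"
      by (simp add: emeasure_density ennreal_mult' Kp_def ennreal_indicator)
    also have "\<dots> = ennreal (\<integral>y. Kp y * indicator U y \<partial>lborel)"
      using i1 Kpn by (intro nn_integral_eq_integral) auto
    also have "\<dots> = ennreal (\<integral>y. Kn y * indicator U y \<partial>lborel)" by (simp add: eqI)
    also have "\<dots> = (\<integral>\<^sup>+y. ennreal (Kn y * indicator U y) \<partial>lborel)"
      using i2 Kpn by (intro nn_integral_eq_integral[symmetric]) auto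
    also have "\<dots> = emeasure (density lborel (\<lambda>y. ennreal (Kn y))) U"
      by (simp add: emeasure_density ennreal_mult' Kn_def ennreal_indicator)
    finally show ?thesis .
  qed
  have fin: "emeasure (density lborel (\<lambda>y. ennreal (Kp y))) UNIV \<noteq> \<infinity>"
  proof -
    have "emeasure (density lborel (\<lambda>y. ennreal (Kp y))) UNIV = (\<integral>\<^sup>+y. ennreal (Kp y) \<partial>lborel)"
      by (simp add: emeasure_density)
    also have "\<dots> = ennreal (\<integral>y. Kp y \<partial>lborel)"
      using Kpi Kpn by (intro nn_integral_eq_integral) auto
    finally show ?thesis by simp
  qed
  have "density lborel (\<lambda>y. ennreal (Kp y)) = density lborel (\<lambda>y. ennreal (Kn y))"
  proof (rule measure_eqI_generator_eq[where E="{S. open S}" and \<Omega>=UNIV and A="\<lambda>_. UNIV"])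
    show "Int_stable {S::'a set. open S}" by (auto simp: Int_stable_def)
    show "{S::'a set. open S} \<subseteq> Pow UNIV" by auto
    show "emeasure (density lborel (\<lambda>y. ennreal (Kp y))) X = emeasure (density lborel (\<lambda>y. ennreal (Kn y))) X"
      if "X \<in> {S. open S}" for X using em that by auto
    show "sets (density lborel (\<lambda>y. ennreal (Kp y))) = sigma_sets UNIV {S. open S}"
      by (simp add: sets_borel)
    show "sets (density lborel (\<lambda>y. ennreal (Kn y))) = sigma_sets UNIV {S. open S}"
      by (simp add: sets_borel)
    show "range (\<lambda>_. UNIV) \<subseteq> {S::'a set. open S}" by auto
    show "(\<Union>i::nat. UNIV) = (UNIV :: 'a set)" by auto
    show "emeasure (density lborel (\<lambda>y. ennreal (Kp y))) UNIV \<noteq> \<infinity>" for i :: nat by (rule fin)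
  qed
  then have "AE y in lborel. ennreal (Kp y) = ennreal (Kn y)"
    by (intro sigma_finite_measure.density_unique[OF sigma_finite_lborel]) auto
  then show ?thesis
  proof (rule AE_mp, intro AE_I2 impI)
    fix y assume "ennreal (Kp y) = ennreal (Kn y)"
    then have "Kp y = Kn y" using Kpn by (subst (asm) ennreal_inj) auto
    then show "K y = 0" unfolding Kp_def Kn_def by (auto simp: max_def split: if_splits)
  qed
qed

lemma heat_unique_L1:
  fixes K :: "'a::euclidean_space \<Rightarrow> real"
  assumes Ki: "integrable lborel K"
    and e: "\<epsilon> > 0"
    and z: "\<And>v. (\<integral>y. K y * psi \<epsilon> (v - y) \<partial>lborel) = 0"
  shows "AE y in lborel. K y = 0"
proof -
  have Km[measurable]: "K \<in> borel_measurable borel" using Ki by auto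
  have gi: "integrable lborel (\<lambda>y. K y * exp (- c * (norm (v - y))\<^sup>2))" if c: "c > 0" for c v
  proof -
    have "integrable lborel (\<lambda>y. \<bar>K y\<bar>)" using Ki by auto
    then show ?thesis
    proof (rule Bochner_Integration.integrable_bound)
      show "AE y in lborel. norm (K y * exp (- c * (norm (v - y))\<^sup>2)) \<le> norm \<bar>K y\<bar>"
      proof (rule AE_I2)
        fix y
        have "exp (- c * (norm (v - y))\<^sup>2) \<le> 1" using c by simp
        then have "\<bar>K y\<bar> * exp (- c * (norm (v - y))\<^sup>2) \<le> \<bar>K y\<bar> * 1" by (intro mult_left_mono) auto
        then show "norm (K y * exp (- c * (norm (v - y))\<^sup>2)) \<le> norm \<bar>K y\<bar>" by (simp add: abs_mult)
      qed
    qed measurable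
  qed
  have zero: "(\<integral>y. K y * psi t (v - y) \<partial>lborel) = 0" if "t > 0" for t v
    by (rule heat_core[OF Km gi e z that])
  have weak: "(\<integral>y. K y * \<phi> y \<partial>lborel) = 0" if "continuous_on UNIV \<phi>" "\<And>y. \<bar>\<phi> y\<bar> \<le> 1" for \<phi>
    by (rule heat_weak[OF Ki zero that])
  show ?thesis
    by (rule AE_zero_from_open[OF Ki weak_open[OF Ki weak]])
qed


lemma psi_le: "t > 0 \<Longrightarrow> psi t x \<le> (2*pi*t) powr (- real DIM('a) / 2)"
  for x :: "'a::euclidean_space"
  unfolding psi_def by (intro mult_left_le) auto

lemma conv_integrable:
  fixes f :: "'a::euclidean_space \<Rightarrow> real"
  assumes fi: "integrable lborel f" and t: "t > 0"
  shows "integrable lborel (\<lambda>y. f y * psi t (v - y))"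
proof -
  have [measurable]: "f \<in> borel_measurable borel" using fi by auto
  have "integrable lborel (\<lambda>y. (2*pi*t) powr (- real DIM('a) / 2) * \<bar>f y\<bar>)" using fi by auto
  then show ?thesis
  proof (rule Bochner_Integration.integrable_bound)
    show "AE y in lborel. norm (f y * psi t (v - y)) \<le> norm ((2*pi*t) powr (- real DIM('a) / 2) * \<bar>f y\<bar>)"
    proof (rule AE_I2)
      fix y
      have "\<bar>f y\<bar> * psi t (v - y) \<le> \<bar>f y\<bar> * (2*pi*t) powr (- real DIM('a) / 2)"
        using psi_le[OF t] by (intro mult_left_mono) auto
      then show "norm (f y * psi t (v - y)) \<le> norm ((2*pi*t) powr (- real DIM('a) / 2) * \<bar>f y\<bar>)"
        by (simp add: abs_mult abs_psi[OF t] mult_ac)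
    qed
  qed measurable
qed

lemma conv_le:
  fixes f :: "'a::euclidean_space \<Rightarrow> real"
  assumes fi: "integrable lborel f" and fn: "\<And>y. f y \<ge> 0" and t: "t > 0"
  shows "conv f (psi t) v \<le> (\<integral>y. f y \<partial>lborel) * (2*pi*t) powr (- real DIM('a) / 2)"
proof -
  have le: "f y * psi t (v - y) \<le> f y * (2*pi*t) powr (- real DIM('a) / 2)" for y
    using psi_le[OF t, of "v - y"] fn[of y] by (intro mult_left_mono) auto
  have "conv f (psi t) v \<le> (\<integral>y. f y * (2*pi*t) powr (- real DIM('a) / 2) \<partial>lborel)"
    unfolding conv_def using conv_integrable[OF fi t] fi
    by (intro integral_mono le) auto
  then show ?thesis by simp
qed

lemma conv_nonneg:
  fixes f :: "'a::euclidean_space \<Rightarrow> real"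
  assumes fn: "\<And>y. f y \<ge> 0" and t: "t > 0"
  shows "conv f (psi t) v \<ge> 0"
  unfolding conv_def by (intro integral_nonneg_AE) (auto intro!: mult_nonneg_nonneg fn psi_nonneg[OF t])

lemma conv_pos:
  fixes f :: "'a::euclidean_space \<Rightarrow> real"
  assumes fi: "integrable lborel f" and fn: "\<And>y. f y \<ge> 0" and t: "t > 0"
    and nz: "\<not> (AE v in lborel. f v = 0)"
  shows "conv f (psi t) v > 0"
proof -
  have "conv f (psi t) v \<noteq> 0"
  proof
    assume "conv f (psi t) v = 0"
    then have "AE y in lborel. f y * psi t (v - y) = 0"
      unfolding conv_def using conv_integrable[OF fi t]
      by (subst (asm) integral_nonneg_eq_0_iff_AE) (auto intro!: mult_nonneg_nonneg fn psi_nonneg[OF t])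
    moreover have fz: "f y = 0" if "f y * psi t (v - y) = 0" for y
    proof -
      have "psi t (v - y) > 0" by (rule psi_pos[OF t])
      with that show ?thesis by simp
    qed
    ultimately have "AE y in lborel. f y = 0"
      by (rule eventually_mono)
    with nz show False by simp
  qed
  moreover have "conv f (psi t) v \<ge> 0" by (rule conv_nonneg) (use fn t in auto)
  ultimately show ?thesis by linarith
qed

lemma conv_continuous:
  fixes f :: "'a::euclidean_space \<Rightarrow> real"
  assumes fi: "integrable lborel f" and t: "t > 0"
  shows "continuous_on UNIV (conv f (psi t))"
  unfolding continuous_on_def
proof (intro ballI)
  fix v :: 'a
  have [measurable]: "f \<in> borel_measurable borel" using fi by auto
  show "(conv f (psi t) \<longlongrightarrow> conv f (psi t) v) (at v within UNIV)"
    unfolding conv_def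
  proof (rule dominated_at[where w="\<lambda>y. (2*pi*t) powr (- real DIM('a) / 2) * \<bar>f y\<bar>"])
    show "(\<lambda>y. f y * psi t (v - y)) \<in> borel_measurable lborel" by measurable
    show "(\<lambda>y. f y * psi t (z - y)) \<in> borel_measurable lborel" for z by measurable
    show "integrable lborel (\<lambda>y. (2*pi*t) powr (- real DIM('a) / 2) * \<bar>f y\<bar>)" using fi by auto
    show "((\<lambda>z. f y * psi t (z - y)) \<longlongrightarrow> f y * psi t (v - y)) (at v within UNIV)" for y
    proof -
      have "continuous_on UNIV (\<lambda>z. f y * psi t (z - y))"
        by (intro continuous_intros continuous_on_compose2[OF continuous_psi[of UNIV t]]) auto
      then show ?thesis by (simp add: continuous_on_def)
    qed
    show "eventually (\<lambda>z. AE y in lborel. norm (f y * psi t (z - y)) \<le> (2*pi*t) powr (- real DIM('a) / 2) * \<bar>f y\<bar>) (at v within UNIV)"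
    proof (intro always_eventually allI AE_I2)
      fix z y
      have "\<bar>f y\<bar> * psi t (z - y) \<le> \<bar>f y\<bar> * (2*pi*t) powr (- real DIM('a) / 2)"
        using psi_le[OF t] by (intro mult_left_mono) auto
      then show "norm (f y * psi t (z - y)) \<le> (2*pi*t) powr (- real DIM('a) / 2) * \<bar>f y\<bar>"
        by (simp add: abs_mult abs_psi[OF t] mult_ac)
    qed
  qed
qed

lemma exists_ball_mass:
  fixes f :: "'a::euclidean_space \<Rightarrow> real"
  assumes fi: "integrable lborel f" and fn: "\<And>y. f y \<ge> 0"
    and nz: "\<not> (AE v in lborel. f v = 0)"
  shows "\<exists>R. (\<integral>y. f y * indicator (cball 0 R) y \<partial>lborel) > 0"
proof (rule ccontr)
  assume "\<not> ?thesis"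
  then have z: "(\<integral>y. f y * indicator (cball 0 (real n)) y \<partial>lborel) \<le> 0" for n by (meson not_less)
  have [measurable]: "f \<in> borel_measurable borel" using fi by auto
  have "AE y in lborel. f y * indicator (cball 0 (real n)) y = 0" for n
  proof -
    have i: "integrable lborel (\<lambda>y. f y * indicator (cball 0 (real n)) y)"
    proof -
      have "integrable lborel (\<lambda>y. indicator (cball 0 (real n)) y *\<^sub>R f y)"
        by (rule integrable_mult_indicator) (use fi in auto)
      then show ?thesis by (simp add: mult.commute)
    qed
    have nn: "0 \<le> (\<integral>y. f y * indicator (cball 0 (real n)) y \<partial>lborel)"
      by (intro integral_nonneg_AE) (auto simp: fn)
    with z[of n] have "(\<integral>y. f y * indicator (cball 0 (real n)) y \<partial>lborel) = 0" by linarith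
    then show ?thesis using i by (subst (asm) integral_nonneg_eq_0_iff_AE) (auto simp: fn)
  qed
  then have "AE y in lborel. \<forall>n. f y * indicator (cball 0 (real n)) y = 0"
    by (simp only: AE_all_countable) blast
  then have "AE y in lborel. f y = 0"
  proof eventually_elim
    case (elim y)
    obtain n :: nat where "norm y \<le> real n" using real_arch_simple by blast
    then have "y \<in> cball 0 (real n)" by simp
    with elim[rule_format, of n] show ?case by simp
  qed
  with nz show False by simp
qed

lemma conv_lower:
  fixes f :: "'a::euclidean_space \<Rightarrow> real"
  assumes fi: "integrable lborel f" and fn: "\<And>y. f y \<ge> 0" and t: "t > 0"
    and nz: "\<not> (AE v in lborel. f v = 0)"
  shows "\<exists>c0>0. \<forall>v. conv f (psi t) v \<ge> c0 * exp (- (norm v)\<^sup>2 / t)"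
proof -
  have [measurable]: "f \<in> borel_measurable borel" using fi by auto
  obtain R where R: "(\<integral>y. f y * indicator (cball 0 R) y \<partial>lborel) > 0"
    using exists_ball_mass[OF fi fn nz] by blast
  define a where "a = (\<integral>y. f y * indicator (cball 0 R) y \<partial>lborel)"
  define Ct where "Ct = (2*pi*t) powr (- real DIM('a) / 2)"
  have Ct: "Ct > 0" unfolding Ct_def using t by simp
  have R0: "R \<ge> 0"
  proof (rule ccontr)
    assume "\<not> R \<ge> 0"
    then have "cball (0::'a) R = {}" by auto
    then show False using R by simp
  qed
  have i: "integrable lborel (\<lambda>y. f y * indicator (cball 0 R) y)"
  proof -
    have "integrable lborel (\<lambda>y. indicator (cball 0 R) y *\<^sub>R f y)"
      by (rule integrable_mult_indicator) (use fi in auto)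
    then show ?thesis by (simp add: mult.commute)
  qed
  show ?thesis
  proof (intro exI[of _ "a * Ct * exp (- R\<^sup>2 / t)"] conjI allI)
    show "0 < a * Ct * exp (- R\<^sup>2 / t)" using R Ct unfolding a_def by simp
    fix v :: 'a
    have "(\<integral>y. f y * indicator (cball 0 R) y * (Ct * exp (- R\<^sup>2 / t) * exp (- (norm v)\<^sup>2 / t)) \<partial>lborel)
        \<le> conv f (psi t) v"
      unfolding conv_def
    proof (rule integral_mono)
      show "integrable lborel (\<lambda>y. f y * indicator (cball 0 R) y * (Ct * exp (- R\<^sup>2 / t) * exp (- (norm v)\<^sup>2 / t)))"
        using i by auto
      show "integrable lborel (\<lambda>y. f y * psi t (v - y))" by (rule conv_integrable[OF fi t])
      fix y :: 'a
      show "f y * indicator (cball 0 R) y * (Ct * exp (- R\<^sup>2 / t) * exp (- (norm v)\<^sup>2 / t)) \<le> f y * psi t (v - y)"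
      proof (cases "y \<in> cball 0 R")
        case True
        then have ny: "norm y \<le> R" by simp
        have "norm (v - y) \<le> norm v + R" using norm_triangle_ineq4[of v y] ny by linarith
        then have "(norm (v - y))\<^sup>2 \<le> (norm v + R)\<^sup>2" by (intro power_mono) auto
        also have "\<dots> \<le> 2 * (norm v)\<^sup>2 + 2 * R\<^sup>2"
          by (smt (verit) sum_squares_bound power2_sum)
        finally have d0: "(norm (v - y))\<^sup>2 \<le> 2 * (norm v)\<^sup>2 + 2 * R\<^sup>2" .
        have d1: "(norm (v - y))\<^sup>2 / (2*t) \<le> (2 * (norm v)\<^sup>2 + 2 * R\<^sup>2) / (2*t)"
          using d0 t by (intro divide_right_mono) auto
        have d2: "(2 * (norm v)\<^sup>2 + 2 * R\<^sup>2) / (2*t) = R\<^sup>2 / t + (norm v)\<^sup>2 / t"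
          using t by (simp add: field_simps)
        have "exp (- (R\<^sup>2 / t + (norm v)\<^sup>2 / t)) \<le> exp (- ((norm (v - y))\<^sup>2 / (2 * t)))"
          using d1 d2 by simp
        then have "exp (- R\<^sup>2 / t) * exp (- (norm v)\<^sup>2 / t) \<le> exp (- (norm (v - y))\<^sup>2 / (2 * t))"
          by (simp add: exp_add[symmetric] exp_minus_inverse)
        then have "Ct * exp (- R\<^sup>2 / t) * exp (- (norm v)\<^sup>2 / t) \<le> psi t (v - y)"
          using Ct unfolding psi_def Ct_def by (simp add: mult.assoc)
        then show ?thesis using True fn[of y] by (simp add: mult_left_mono)
      next
        case False
        then show ?thesis using fn[of y] psi_nonneg[OF t, where x="v - y"] by simp
      qed
    qed
    moreover have "(\<integral>y. f y * indicator (cball 0 R) y * (Ct * exp (- R\<^sup>2 / t) * exp (- (norm v)\<^sup>2 / t)) \<partial>lborel)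
        = a * (Ct * exp (- R\<^sup>2 / t) * exp (- (norm v)\<^sup>2 / t))"
      unfolding a_def by (rule integral_mult_left_zero)
    ultimately show "a * Ct * exp (- R\<^sup>2 / t) * exp (- (norm v)\<^sup>2 / t) \<le> conv f (psi t) v"
      by (simp add: mult.assoc)
  qed
qed


lemma conv_swap:
  fixes g :: "'a::euclidean_space \<Rightarrow> real"
  assumes [measurable]: "g \<in> borel_measurable borel"
  shows "integrable lborel (\<lambda>y. psi t y * g (v - y)) \<longleftrightarrow> integrable lborel (\<lambda>y. g y * psi t (v - y))"
    and "(\<integral>y. psi t y * g (v - y) \<partial>lborel) = (\<integral>y. g y * psi t (v - y) \<partial>lborel)"
proof -
  have m: "(\<lambda>y. g y * psi t (v - y)) \<in> borel_measurable borel" by measurable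
  have e: "(\<lambda>x. g (v + (-1) *\<^sub>R x) * psi t (v - (v + (-1) *\<^sub>R x))) = (\<lambda>y. psi t y * g (v - y))"
    by (auto simp: mult.commute)
  show "integrable lborel (\<lambda>y. psi t y * g (v - y)) \<longleftrightarrow> integrable lborel (\<lambda>y. g y * psi t (v - y))"
    using lborel_integral_affine(1)[OF m, of "-1" v] unfolding e by simp
  show "(\<integral>y. psi t y * g (v - y) \<partial>lborel) = (\<integral>y. g y * psi t (v - y) \<partial>lborel)"
    using lborel_integral_affine(2)[OF m, of "-1" v] unfolding e by simp
qed

lemma norm_diff_sq: "(norm (v - y))\<^sup>2 = (norm v)\<^sup>2 - 2 * (y \<bullet> v) + (norm (y::'a::real_inner))\<^sup>2"
  by (simp add: power2_norm_eq_inner inner_diff_left inner_diff_right inner_commute)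

lemma psi_quad:
  fixes w v :: "'a::euclidean_space"
  assumes t: "t > 0"
  shows "integrable lborel (\<lambda>y. psi t y * (a0 + w \<bullet> (v - y) + b * (norm (v - y))\<^sup>2))"
    and "(\<integral>y. psi t y * (a0 + w \<bullet> (v - y) + b * (norm (v - y))\<^sup>2) \<partial>lborel)
         = a0 + w \<bullet> v + b * (norm v)\<^sup>2 + b * t * real DIM('a)"
proof -
  define c where "c = a0 + w \<bullet> v + b * (norm v)\<^sup>2"
  define w' where "w' = w + (2 * b) *\<^sub>R v"
  have e: "psi t y * (a0 + w \<bullet> (v - y) + b * (norm (v - y))\<^sup>2) = c * psi t y - psi t y * (y \<bullet> w') + b * (psi t y * (norm y)\<^sup>2)" for y
    unfolding c_def w'_def norm_diff_sq by (simp add: algebra_simps inner_diff_right inner_add_right inner_commute)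
  have i0: "integrable lborel (psi t :: 'a \<Rightarrow> real)" by (rule psi_integral0(1)[OF t])
  have i1: "integrable lborel (\<lambda>y. psi t y * (y \<bullet> w'))" by (rule psi_moment1(1)[OF t])
  have i2: "integrable lborel (\<lambda>y. psi t y * (norm (y::'a))\<^sup>2)" by (rule psi_moment2(1)[OF t])
  show "integrable lborel (\<lambda>y. psi t y * (a0 + w \<bullet> (v - y) + b * (norm (v - y))\<^sup>2))"
    unfolding e using i0 i1 i2 by auto
  have "(\<integral>y. psi t y * (a0 + w \<bullet> (v - y) + b * (norm (v - y))\<^sup>2) \<partial>lborel)
      = c * (\<integral>y. psi t (y::'a) \<partial>lborel) - (\<integral>y. psi t y * (y \<bullet> w') \<partial>lborel) + b * (\<integral>y. psi t y * (norm (y::'a))\<^sup>2 \<partial>lborel)"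
    unfolding e using i0 i1 i2 by simp
  also have "\<dots> = c + b * t * real DIM('a)"
  proof -
    have "(\<integral>y. psi t (y::'a) \<partial>lborel) = 1" by (rule psi_integral0(2)[OF t])
    moreover have "(\<integral>y. psi t y * (norm (y::'a))\<^sup>2 \<partial>lborel) = t * real DIM('a)" by (rule psi_moment2(2)[OF t])
    moreover have "(\<integral>y. psi t y * (y \<bullet> w') \<partial>lborel) = 0" by (rule psi_moment1(2)[OF t])
    ultimately show ?thesis by simp
  qed
  finally show "(\<integral>y. psi t y * (a0 + w \<bullet> (v - y) + b * (norm (v - y))\<^sup>2) \<partial>lborel)
         = a0 + w \<bullet> v + b * (norm v)\<^sup>2 + b * t * real DIM('a)" unfolding c_def .
qed

lemma psi_shift_moment:
  fixes y u :: "'a::euclidean_space"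
  assumes t: "t > 0"
  shows "(\<integral>\<^sup>+v. ennreal (psi t (v - y) * (norm (v - u))\<^sup>2) \<partial>lborel) = ennreal ((norm (y - u))\<^sup>2 + t * real DIM('a))"
proof -
  define g where "g v = psi t (v - y) * (norm (v - u))\<^sup>2" for v
  have gm[measurable]: "g \<in> borel_measurable borel" unfolding g_def by measurable
  have e: "(\<lambda>x. g (y + (-1) *\<^sub>R x)) = (\<lambda>x. psi t x * (0 + 0 \<bullet> ((y - u) - x) + 1 * (norm ((y - u) - x))\<^sup>2))"
    unfolding g_def by (auto simp: psi_minus algebra_simps)
  have i: "integrable lborel g"
    using lborel_integral_affine(1)[OF gm, of "-1" y] psi_quad(1)[OF t, of 0 0 "y - u" 1] unfolding e by simp
  have v: "(\<integral>v. g v \<partial>lborel) = (norm (y - u))\<^sup>2 + t * real DIM('a)"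
    using lborel_integral_affine(2)[OF gm, of "-1" y] psi_quad(2)[OF t, of 0 0 "y - u" 1] unfolding e by simp
  have "(\<integral>\<^sup>+v. ennreal (g v) \<partial>lborel) = ennreal (\<integral>v. g v \<partial>lborel)"
  proof -
    have gnn: "0 \<le> g v" for v unfolding g_def by (intro mult_nonneg_nonneg psi_nonneg[OF t]) auto
    show ?thesis using i gnn by (intro nn_integral_eq_integral) auto
  qed
  then show ?thesis unfolding v by (simp add: g_def)
qed


lemma conv_nn_tonelli:
  fixes f \<phi> :: "'a::euclidean_space \<Rightarrow> real"
  assumes fi: "integrable lborel f" and fn: "\<And>y. f y \<ge> 0" and t: "t > 0"
    and pm[measurable]: "\<phi> \<in> borel_measurable borel" and pn: "\<And>v. \<phi> v \<ge> 0"
  shows "(\<integral>\<^sup>+v. ennreal (conv f (psi t) v * \<phi> v) \<partial>lborel)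
       = (\<integral>\<^sup>+y. ennreal (f y) * (\<integral>\<^sup>+v. ennreal (psi t (v - y) * \<phi> v) \<partial>lborel) \<partial>lborel)"
proof -
  have fm[measurable]: "f \<in> borel_measurable borel" using fi by auto
  have e1: "ennreal (conv f (psi t) v * \<phi> v) = (\<integral>\<^sup>+y. ennreal (f y * psi t (v - y) * \<phi> v) \<partial>lborel)" for v
  proof -
    have "ennreal (conv f (psi t) v) = (\<integral>\<^sup>+y. ennreal (f y * psi t (v - y)) \<partial>lborel)"
      unfolding conv_def using conv_integrable[OF fi t, of v]
      by (intro nn_integral_eq_integral[symmetric]) (auto intro!: mult_nonneg_nonneg fn psi_nonneg[OF t])
    then have "ennreal (conv f (psi t) v) * ennreal (\<phi> v) = (\<integral>\<^sup>+y. ennreal (f y * psi t (v - y)) * ennreal (\<phi> v) \<partial>lborel)"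
      by (simp add: nn_integral_multc)
    moreover have "ennreal (conv f (psi t) v * \<phi> v) = ennreal (conv f (psi t) v) * ennreal (\<phi> v)"
    proof -
      have "conv f (psi t) v \<ge> 0" by (rule conv_nonneg) (use fn t in auto)
      then show ?thesis using pn[of v] by (simp add: ennreal_mult)
    qed
    moreover have "ennreal (f y * psi t (v - y)) * ennreal (\<phi> v) = ennreal (f y * psi t (v - y) * \<phi> v)" for y
    proof -
      have "f y * psi t (v - y) \<ge> 0" using fn[of y] psi_nonneg[OF t, where x="v - y"] by simp
      then show ?thesis using pn[of v] by (simp add: ennreal_mult)
    qed
    ultimately show ?thesis by simp
  qed
  have "(\<integral>\<^sup>+v. ennreal (conv f (psi t) v * \<phi> v) \<partial>lborel)
      = (\<integral>\<^sup>+v. (\<integral>\<^sup>+y. ennreal (f y * psi t (v - y) * \<phi> v) \<partial>lborel) \<partial>lborel)"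
    by (simp add: e1)
  also have "\<dots> = (\<integral>\<^sup>+y. (\<integral>\<^sup>+v. ennreal (f y * psi t (v - y) * \<phi> v) \<partial>lborel) \<partial>lborel)"
    by (rule lborel_pair.Fubini') measurable
  also have "\<dots> = (\<integral>\<^sup>+y. ennreal (f y) * (\<integral>\<^sup>+v. ennreal (psi t (v - y) * \<phi> v) \<partial>lborel) \<partial>lborel)"
  proof (intro nn_integral_cong)
    fix y
    have "(\<integral>\<^sup>+v. ennreal (f y * psi t (v - y) * \<phi> v) \<partial>lborel) = (\<integral>\<^sup>+v. ennreal (f y) * ennreal (psi t (v - y) * \<phi> v) \<partial>lborel)"
      using fn[of y] by (intro nn_integral_cong) (simp add: ennreal_mult' mult.assoc)
    also have "\<dots> = ennreal (f y) * (\<integral>\<^sup>+v. ennreal (psi t (v - y) * \<phi> v) \<partial>lborel)"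
      by (rule nn_integral_cmult) measurable
    finally show "(\<integral>\<^sup>+v. ennreal (f y * psi t (v - y) * \<phi> v) \<partial>lborel) = ennreal (f y) * (\<integral>\<^sup>+v. ennreal (psi t (v - y) * \<phi> v) \<partial>lborel)" .
  qed
  finally show ?thesis .
qed

lemma conv_mass:
  fixes f :: "'a::euclidean_space \<Rightarrow> real"
  assumes fi: "integrable lborel f" and fn: "\<And>y. f y \<ge> 0" and t: "t > 0"
  shows "(\<integral>\<^sup>+v. ennreal (conv f (psi t) v) \<partial>lborel) = ennreal (\<integral>y. f y \<partial>lborel)"
proof -
  have fm[measurable]: "f \<in> borel_measurable borel" using fi by auto
  have "(\<integral>\<^sup>+v. ennreal (conv f (psi t) v * 1) \<partial>lborel)
       = (\<integral>\<^sup>+y. ennreal (f y) * (\<integral>\<^sup>+v. ennreal (psi t (v - y) * 1) \<partial>lborel) \<partial>lborel)"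
    by (rule conv_nn_tonelli[OF fi fn t]) auto
  also have "\<dots> = (\<integral>\<^sup>+y. ennreal (f y) \<partial>lborel)"
  proof (intro nn_integral_cong)
    fix y :: 'a
    have "(\<integral>\<^sup>+v. ennreal (psi t (v - y)) \<partial>lborel) = ennreal (\<integral>v. psi t (v - y) \<partial>lborel)"
      using psi_integral(1)[OF t, of y] by (intro nn_integral_eq_integral) (auto intro: psi_nonneg[OF t])
    also have "\<dots> = 1" using psi_integral(2)[OF t, of y] by simp
    finally show "ennreal (f y) * (\<integral>\<^sup>+v. ennreal (psi t (v - y) * 1) \<partial>lborel) = ennreal (f y)" by simp
  qed
  also have "\<dots> = ennreal (\<integral>y. f y \<partial>lborel)"
    using fi fn by (intro nn_integral_eq_integral) auto
  finally show ?thesis by simp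
qed

lemma conv_integrable_conv:
  fixes f :: "'a::euclidean_space \<Rightarrow> real"
  assumes fi: "integrable lborel f" and fn: "\<And>y. f y \<ge> 0" and t: "t > 0"
  shows "integrable lborel (conv f (psi t))"
proof (rule integrableI_nonneg)
  show "conv f (psi t) \<in> borel_measurable lborel"
    using borel_measurable_continuous_onI[OF conv_continuous[OF fi t]] by simp
  show "AE x in lborel. 0 \<le> conv f (psi t) x" by (intro AE_I2 conv_nonneg[OF fn t])
  show "(\<integral>\<^sup>+x. ennreal (conv f (psi t) x) \<partial>lborel) < \<infinity>"
    using conv_mass[OF fi fn t] by simp
qed


lemma step_quadratic:
  fixes f :: "'a::euclidean_space \<Rightarrow> real"
    and \<epsilon> l0 l2 :: real and l1 :: 'a
  assumes eps: "\<epsilon> > 0"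
    and f_int: "integrable lborel f"
    and f_nonneg: "\<And>v. f v \<ge> 0"
    and f_nonzero: "\<not> (AE v in lborel. f v = 0)"
    and conv_def: "\<And>v. integrable lborel (\<lambda>y. psi \<epsilon> y * ln (conv f (psi \<epsilon>) (v - y)))"
    and eq: "\<And>v. conv (psi \<epsilon>) (\<lambda>w. ln (conv f (psi \<epsilon>) w)) v
                  = l0 + inner l1 v + l2 / 2 * (norm v)\<^sup>2"
  shows "\<And>v. conv f (psi \<epsilon>) v = exp ((l0 - l2 * \<epsilon> * real DIM('a) / 2) + l1 \<bullet> v + l2 / 2 * (norm v)\<^sup>2)"
proof -
  fix v0 :: 'a
  have fm[measurable]: "f \<in> borel_measurable borel" using f_int by auto
  define F where "F v = conv f (psi \<epsilon>) v" for v
  define m where "m = (\<integral>y. f y \<partial>lborel)"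
  define Ce where "Ce = (2*pi*\<epsilon>) powr (- real DIM('a) / 2)"
  have Fpos: "F v > 0" for v unfolding F_def by (rule conv_pos[OF f_int _ eps f_nonzero]) (rule f_nonneg)
  have Fcont: "continuous_on UNIV F" unfolding F_def[abs_def] by (rule conv_continuous[OF f_int eps])
  have Fle: "F v \<le> m * Ce" for v unfolding F_def m_def Ce_def by (rule conv_le[OF f_int _ eps]) (rule f_nonneg)
  obtain c0 where c0: "c0 > 0" and Flow: "\<And>v. F v \<ge> c0 * exp (- (norm v)\<^sup>2 / \<epsilon>)"
    using conv_lower[OF f_int _ eps f_nonzero] f_nonneg unfolding F_def by blast
  have mCe: "m * Ce > 0" using Fpos[of 0] Fle[of 0] by linarith
  define g where "g v = ln (F v)" for v
  have gcont: "continuous_on UNIV g"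
  proof -
    have Fne: "F v \<noteq> 0" for v using Fpos[of v] by simp
    show ?thesis unfolding g_def[abs_def] using Fcont Fne by (intro continuous_on_ln) auto
  qed
  define C1 where "C1 = \<bar>ln (m * Ce)\<bar> + \<bar>ln c0\<bar> + 1 / \<epsilon>"
  have gbnd: "\<bar>g v\<bar> \<le> C1 * (1 + (norm v)\<^sup>2)" for v
  proof -
    have up: "g v \<le> ln (m * Ce)" unfolding g_def using Fpos[of v] Fle[of v] by simp
    have "ln (c0 * exp (- (norm v)\<^sup>2 / \<epsilon>)) \<le> g v"
      unfolding g_def using Flow[of v] c0 Fpos[of v] by (subst ln_le_cancel_iff) auto
    then have low: "ln c0 - (norm v)\<^sup>2 / \<epsilon> \<le> g v" using c0 by (simp add: ln_mult)
    have n0: "0 \<le> (norm v)\<^sup>2 / \<epsilon>" using eps by simp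
    have "\<bar>g v\<bar> \<le> \<bar>ln (m * Ce)\<bar> + \<bar>ln c0\<bar> + (norm v)\<^sup>2 / \<epsilon>" using up low n0 by linarith
    also have "\<dots> \<le> C1 * (1 + (norm v)\<^sup>2)"
    proof -
      have "C1 * (1 + (norm v)\<^sup>2) = C1 + (\<bar>ln (m * Ce)\<bar> + \<bar>ln c0\<bar>) * (norm v)\<^sup>2 + (norm v)\<^sup>2 / \<epsilon>"
        unfolding C1_def by (simp add: algebra_simps)
      moreover have "0 \<le> (\<bar>ln (m * Ce)\<bar> + \<bar>ln c0\<bar>) * (norm v)\<^sup>2" by simp
      moreover have "0 \<le> 1 / \<epsilon>" using eps by simp
      ultimately show ?thesis unfolding C1_def by linarith
    qed
    finally show ?thesis .
  qed
  have gm[measurable]: "g \<in> borel_measurable borel" by (rule borel_measurable_continuous_onI[OF gcont])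
  define A0 where "A0 = l0 - l2 * \<epsilon> * real DIM('a) / 2"
  define p where "p v = A0 + l1 \<bullet> v + l2 / 2 * (norm v)\<^sup>2" for v
  have pm[measurable]: "p \<in> borel_measurable borel" unfolding p_def by measurable
  have pcont: "continuous_on UNIV p" unfolding p_def by (intro continuous_intros)
  have pconv: "integrable lborel (\<lambda>y. p y * psi \<epsilon> (v - y))"
     "(\<integral>y. p y * psi \<epsilon> (v - y) \<partial>lborel) = l0 + l1 \<bullet> v + l2 / 2 * (norm v)\<^sup>2" for v
  proof -
    have e: "(\<lambda>y. psi \<epsilon> y * p (v - y)) = (\<lambda>y. psi \<epsilon> y * (A0 + l1 \<bullet> (v - y) + (l2 / 2) * (norm (v - y))\<^sup>2))"
      unfolding p_def by simp
    show "integrable lborel (\<lambda>y. p y * psi \<epsilon> (v - y))"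
      using conv_swap(1)[OF pm, of \<epsilon> v] psi_quad(1)[OF eps, of A0 l1 v "l2/2"] unfolding e by simp
    have "(\<integral>y. p y * psi \<epsilon> (v - y) \<partial>lborel) = A0 + l1 \<bullet> v + l2 / 2 * (norm v)\<^sup>2 + l2 / 2 * \<epsilon> * real DIM('a)"
      using conv_swap(2)[OF pm, of \<epsilon> v] psi_quad(2)[OF eps, of A0 l1 v "l2/2"] unfolding e by simp
    also have "\<dots> = l0 + l1 \<bullet> v + l2 / 2 * (norm v)\<^sup>2" unfolding A0_def by (simp add: field_simps)
    finally show "(\<integral>y. p y * psi \<epsilon> (v - y) \<partial>lborel) = l0 + l1 \<bullet> v + l2 / 2 * (norm v)\<^sup>2" .
  qed
  have gconv: "integrable lborel (\<lambda>y. g y * psi \<epsilon> (v - y))"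
     "(\<integral>y. g y * psi \<epsilon> (v - y) \<partial>lborel) = l0 + l1 \<bullet> v + l2 / 2 * (norm v)\<^sup>2" for v
  proof -
    have e: "(\<lambda>y. psi \<epsilon> y * g (v - y)) = (\<lambda>y. psi \<epsilon> y * ln (conv f (psi \<epsilon>) (v - y)))"
      unfolding g_def F_def by simp
    show "integrable lborel (\<lambda>y. g y * psi \<epsilon> (v - y))"
      using conv_swap(1)[OF gm, of \<epsilon> v] conv_def[of v] unfolding e by simp
    show "(\<integral>y. g y * psi \<epsilon> (v - y) \<partial>lborel) = l0 + l1 \<bullet> v + l2 / 2 * (norm v)\<^sup>2"
      using conv_swap(2)[OF gm, of \<epsilon> v] eq[of v] unfolding e Defs.conv_def by simp
  qed
  define h where "h v = g v - p v" for v
  have hcont: "continuous_on UNIV h" unfolding h_def[abs_def] using gcont pcont by (intro continuous_intros)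
  define C2 where "C2 = C1 + \<bar>A0\<bar> + norm l1 + \<bar>l2\<bar>"
  have hbnd: "\<bar>h v\<bar> \<le> C2 * (1 + (norm v)\<^sup>2)" for v
  proof -
    have "\<bar>p v\<bar> \<le> \<bar>A0\<bar> + norm l1 * norm v + \<bar>l2\<bar> * (norm v)\<^sup>2"
    proof -
      have "\<bar>l1 \<bullet> v\<bar> \<le> norm l1 * norm v" by (rule Cauchy_Schwarz_ineq2)
      moreover have "\<bar>l2 / 2 * (norm v)\<^sup>2\<bar> \<le> \<bar>l2\<bar> * (norm v)\<^sup>2" by (simp add: abs_mult)
      ultimately show ?thesis unfolding p_def by linarith
    qed
    also have "\<dots> \<le> (\<bar>A0\<bar> + norm l1 + \<bar>l2\<bar>) * (1 + (norm v)\<^sup>2)"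
    proof -
      have "norm l1 * norm v \<le> norm l1 * (1 + (norm v)\<^sup>2)" by (intro mult_left_mono le_1_plus_sq) auto
      moreover have "\<bar>l2\<bar> * (norm v)\<^sup>2 \<le> \<bar>l2\<bar> * (1 + (norm v)\<^sup>2)" by (intro mult_left_mono) auto
      moreover have "\<bar>A0\<bar> \<le> \<bar>A0\<bar> * (1 + (norm v)\<^sup>2)" by (simp add: algebra_simps)
      moreover have "(\<bar>A0\<bar> + norm l1 + \<bar>l2\<bar>) * (1 + (norm v)\<^sup>2) = \<bar>A0\<bar> * (1 + (norm v)\<^sup>2) + norm l1 * (1 + (norm v)\<^sup>2) + \<bar>l2\<bar> * (1 + (norm v)\<^sup>2)"
        by (simp add: algebra_simps)
      ultimately show ?thesis by linarith
    qed
    finally have "\<bar>p v\<bar> \<le> (\<bar>A0\<bar> + norm l1 + \<bar>l2\<bar>) * (1 + (norm v)\<^sup>2)" .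
    moreover have "C2 * (1 + (norm v)\<^sup>2) = C1 * (1 + (norm v)\<^sup>2) + (\<bar>A0\<bar> + norm l1 + \<bar>l2\<bar>) * (1 + (norm v)\<^sup>2)"
      unfolding C2_def by (simp add: algebra_simps)
    moreover have "\<bar>h v\<bar> \<le> \<bar>g v\<bar> + \<bar>p v\<bar>" unfolding h_def by linarith
    ultimately show ?thesis using gbnd[of v] by linarith
  qed
  have hzero: "(\<integral>y. h y * psi \<epsilon> (v - y) \<partial>lborel) = 0" for v
  proof -
    have "(\<integral>y. h y * psi \<epsilon> (v - y) \<partial>lborel) = (\<integral>y. g y * psi \<epsilon> (v - y) - p y * psi \<epsilon> (v - y) \<partial>lborel)"
      unfolding h_def by (simp add: left_diff_distrib)
    also have "\<dots> = 0" using gconv[of v] pconv[of v] by simp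
    finally show ?thesis .
  qed
  have "h v0 = 0" by (rule heat_unique_cont[OF hcont hbnd eps hzero])
  then have "g v0 = p v0" unfolding h_def by simp
  then show "conv f (psi \<epsilon>) v0 = exp ((l0 - l2 * \<epsilon> * real DIM('a) / 2) + l1 \<bullet> v0 + l2 / 2 * (norm v0)\<^sup>2)"
    using Fpos[of v0] unfolding g_def p_def A0_def F_def by (metis exp_ln)
qed


lemma maxwellian_psi:
  assumes T: "T > 0"
  shows "maxwellian \<rho> u T v = \<rho> * psi T (v - u)"
  unfolding maxwellian_def psi_def using T by (simp add: powr_minus_divide)

lemma step_neg:
  fixes f :: "'a::euclidean_space \<Rightarrow> real" and l1 :: 'a
  assumes eps: "\<epsilon> > 0" and f_int: "integrable lborel f" and f_nonneg: "\<And>v. f v \<ge> 0"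
    and Fexp: "\<And>v. conv f (psi \<epsilon>) v = exp (A0 + l1 \<bullet> v + l2 / 2 * (norm v)\<^sup>2)"
  shows "l2 < 0"
proof (rule ccontr)
  assume "\<not> l2 < 0"
  then have l2: "l2 \<ge> 0" by simp
  define F where "F v = conv f (psi \<epsilon>) v" for v
  have Fi: "integrable lborel F" unfolding F_def[abs_def] by (rule conv_integrable_conv[OF f_int _ eps]) (rule f_nonneg)
  have Fm[measurable]: "F \<in> borel_measurable borel" using Fi by auto
  have Fpos: "F v > 0" for v unfolding F_def Fexp by simp
  have Fi2: "integrable lborel (\<lambda>v. F (- v))"
    using lborel_integral_affine(1)[OF Fm, of "-1" 0] Fi by simp
  have big: "exp A0 \<le> F v + F (- v)" for v
  proof (cases "l1 \<bullet> v \<ge> 0")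
    case True
    have "A0 \<le> A0 + l1 \<bullet> v + l2 / 2 * (norm v)\<^sup>2" using True l2 by simp
    then have "exp A0 \<le> F v" unfolding F_def Fexp by simp
    then show ?thesis using Fpos[of "- v"] by linarith
  next
    case False
    have nn: "0 \<le> l2 / 2 * (norm v)\<^sup>2" using l2 by simp
    have e: "A0 + l1 \<bullet> (- v) + l2 / 2 * (norm (- v))\<^sup>2 = A0 - l1 \<bullet> v + l2 / 2 * (norm v)\<^sup>2" by simp
    have "A0 \<le> A0 + l1 \<bullet> (- v) + l2 / 2 * (norm (- v))\<^sup>2" unfolding e using False nn by linarith
    then have "exp A0 \<le> F (- v)" unfolding F_def Fexp by simp
    then show ?thesis using Fpos[of v] by linarith
  qed
  have "(\<integral>\<^sup>+v. ennreal (F v + F (- v)) \<partial>lborel) < \<infinity>"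
  proof -
    have "integrable lborel (\<lambda>v. F v + F (- v))" using Fi Fi2 by auto
    then show ?thesis using Fpos by (subst nn_integral_eq_integral) (auto intro: add_pos_pos less_imp_le)
  qed
  moreover have "(\<integral>\<^sup>+v. ennreal (exp A0) \<partial>(lborel::'a measure)) \<le> (\<integral>\<^sup>+v. ennreal (F v + F (- v)) \<partial>lborel)"
    by (intro nn_integral_mono) (use big in \<open>auto intro: ennreal_leI\<close>)
  moreover have "(\<integral>\<^sup>+v. ennreal (exp A0) \<partial>(lborel::'a measure)) = \<infinity>"
    by (simp add: ennreal_mult_top)
  ultimately show False by simp
qed


lemma step_final:
  fixes f :: "'a::euclidean_space \<Rightarrow> real" and l1 :: 'a
  assumes eps: "\<epsilon> > 0" and f_int: "integrable lborel f" and f_nonneg: "\<And>v. f v \<ge> 0"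
    and f_nonzero: "\<not> (AE v in lborel. f v = 0)"
    and Fexp: "\<And>v. conv f (psi \<epsilon>) v = exp (A0 + l1 \<bullet> v + l2 / 2 * (norm v)\<^sup>2)"
    and A0: "A0 = l0 - l2 * \<epsilon> * real DIM('a) / 2"
  shows "l2 \<noteq> 0 \<and> \<epsilon> * \<bar>l2\<bar> < 1 \<and>
    (AE v in lborel. f v = maxwellian
        ((2 * pi / \<bar>l2\<bar>) powr (real DIM('a) / 2) *
           exp (l0 + \<epsilon> * \<bar>l2\<bar> * real DIM('a) / 2
                - \<epsilon> * (norm l1)\<^sup>2 / (2 * (1 - \<epsilon> * \<bar>l2\<bar>))
                + (norm l1)\<^sup>2 / (2 * \<bar>l2\<bar> * (1 - \<epsilon> * \<bar>l2\<bar>))))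
        ((1 / \<bar>l2\<bar>) *\<^sub>R l1)
        (1 / \<bar>l2\<bar> - \<epsilon>) v)"
proof -
  have fm[measurable]: "f \<in> borel_measurable borel" using f_int by auto
  define d where "d = real DIM('a)"
  have d: "d \<ge> 1" unfolding d_def by simp
  have l2neg: "l2 < 0" by (rule step_neg[OF eps f_int f_nonneg Fexp])
  define L where "L = - l2"
  have L: "L > 0" "\<bar>l2\<bar> = L" using l2neg by (auto simp: L_def)
  define S where "S = 1 / L"
  have S: "S > 0" using L by (simp add: S_def)
  define u where "u = (1 / L) *\<^sub>R l1"
  define A1 where "A1 = A0 + (norm l1)\<^sup>2 / (2 * L)"
  define Arho where "Arho = exp A1 * (2 * pi * S) powr (d / 2)"
  have Arho: "Arho > 0" unfolding Arho_def using S by simp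
  define F where "F v = conv f (psi \<epsilon>) v" for v
  have Fpsi: "F v = Arho * psi S (v - u)" for v
  proof -
    have q: "A0 + l1 \<bullet> v + l2 / 2 * (norm v)\<^sup>2 = A1 - (norm (v - u))\<^sup>2 / (2 * S)"
    proof -
      have r: "(norm (v - u))\<^sup>2 = (norm v)\<^sup>2 - 2 * (u \<bullet> v) + (norm u)\<^sup>2" by (rule norm_diff_sq)
      have b: "L * (u \<bullet> v) = l1 \<bullet> v" unfolding u_def using L by simp
      have c: "L * (norm u)\<^sup>2 / 2 = (norm l1)\<^sup>2 / (2 * L)" unfolding u_def using L
        by (simp add: power2_eq_square field_simps)
      have "(norm (v - u))\<^sup>2 / (2 * S) = L * (norm (v - u))\<^sup>2 / 2" unfolding S_def using L by simp
      also have "\<dots> = L / 2 * (norm v)\<^sup>2 - L * (u \<bullet> v) + L * (norm u)\<^sup>2 / 2" unfolding r by (simp add: field_simps)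
      finally have "(norm (v - u))\<^sup>2 / (2 * S) = L / 2 * (norm v)\<^sup>2 - l1 \<bullet> v + (norm l1)\<^sup>2 / (2 * L)"
        unfolding b c .
      then show ?thesis unfolding A1_def L_def by simp
    qed
    have "Arho * psi S (v - u) = exp A1 * ((2 * pi * S) powr (d / 2) * (2 * pi * S) powr (- d / 2)) * exp (- (norm (v - u))\<^sup>2 / (2 * S))"
      unfolding Arho_def psi_def d_def by (simp add: mult_ac)
    also have "(2 * pi * S) powr (d / 2) * (2 * pi * S) powr (- d / 2) = 1"
      using S by (simp add: powr_add[symmetric])
    finally have e1: "Arho * psi S (v - u) = exp A1 * exp (- (norm (v - u))\<^sup>2 / (2 * S))"
      by simp
    have e2: "A1 - (norm (v - u))\<^sup>2 / (2 * S) = A1 + (- (norm (v - u))\<^sup>2 / (2 * S))" by simp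
    have "Arho * psi S (v - u) = exp (A1 - (norm (v - u))\<^sup>2 / (2 * S))"
      unfolding e1 e2 exp_add ..
    then show ?thesis unfolding F_def Fexp q by simp
  qed
  define m where "m = (\<integral>y. f y \<partial>lborel)"
  have mass: "(\<integral>\<^sup>+v. ennreal (F v) \<partial>lborel) = ennreal m"
    unfolding F_def m_def by (rule conv_mass[OF f_int _ eps]) (rule f_nonneg)
  have mArho: "m = Arho"
  proof -
    have "(\<integral>\<^sup>+v. ennreal (F v) \<partial>lborel) = (\<integral>\<^sup>+v. ennreal Arho * ennreal (psi S (v - u)) \<partial>lborel)"
      using Arho by (intro nn_integral_cong) (simp add: Fpsi ennreal_mult')
    also have "\<dots> = ennreal Arho * (\<integral>\<^sup>+v. ennreal (psi S (v - u)) \<partial>lborel)"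
      by (rule nn_integral_cmult) measurable
    also have "(\<integral>\<^sup>+v. ennreal (psi S (v - u)) \<partial>lborel) = ennreal (\<integral>v. psi S (v - u) \<partial>lborel)"
      using psi_integral(1)[OF S, of u] by (intro nn_integral_eq_integral) (auto intro: psi_nonneg[OF S])
    also have "(\<integral>v. psi S (v - u) \<partial>lborel) = 1" by (rule psi_integral(2)[OF S])
    finally have "ennreal m = ennreal Arho" using mass by simp
    then show ?thesis using Arho by (subst (asm) ennreal_inj) (auto simp: m_def intro: integral_nonneg_AE f_nonneg)
  qed
  have m0: "m > 0" using Arho mArho by simp
  have Sgt: "S > \<epsilon>"
  proof (rule ccontr)
    assume "\<not> S > \<epsilon>"
    then have Sle: "S \<le> \<epsilon>" by simp
    define X where "X = (\<integral>\<^sup>+y. ennreal (f y * (norm (y - u))\<^sup>2) \<partial>lborel)"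
    have lhs: "(\<integral>\<^sup>+v. ennreal (F v * (norm (v - u))\<^sup>2) \<partial>lborel) = ennreal (Arho * (S * d))"
    proof -
      have "(\<integral>\<^sup>+v. ennreal (F v * (norm (v - u))\<^sup>2) \<partial>lborel) = (\<integral>\<^sup>+v. ennreal Arho * ennreal (psi S (v - u) * (norm (v - u))\<^sup>2) \<partial>lborel)"
        using Arho by (intro nn_integral_cong) (simp add: Fpsi ennreal_mult' mult.assoc)
      also have "\<dots> = ennreal Arho * (\<integral>\<^sup>+v. ennreal (psi S (v - u) * (norm (v - u))\<^sup>2) \<partial>lborel)"
        by (rule nn_integral_cmult) measurable
      also have "(\<integral>\<^sup>+v. ennreal (psi S (v - u) * (norm (v - u))\<^sup>2) \<partial>lborel) = ennreal ((norm (u - u))\<^sup>2 + S * d)"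
        unfolding d_def by (rule psi_shift_moment[OF S])
      finally show ?thesis using Arho S d by (simp add: ennreal_mult)
    qed
    have rhs: "(\<integral>\<^sup>+v. ennreal (F v * (norm (v - u))\<^sup>2) \<partial>lborel) = X + ennreal (\<epsilon> * d * m)"
    proof -
      have "(\<integral>\<^sup>+v. ennreal (F v * (norm (v - u))\<^sup>2) \<partial>lborel)
          = (\<integral>\<^sup>+y. ennreal (f y) * (\<integral>\<^sup>+v. ennreal (psi \<epsilon> (v - y) * (norm (v - u))\<^sup>2) \<partial>lborel) \<partial>lborel)"
        unfolding F_def by (rule conv_nn_tonelli[OF f_int _ eps]) (auto intro: f_nonneg)
      also have "\<dots> = (\<integral>\<^sup>+y. ennreal (f y * (norm (y - u))\<^sup>2) + ennreal (\<epsilon> * d) * ennreal (f y) \<partial>lborel)"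
      proof (intro nn_integral_cong)
        fix y
        have "(\<integral>\<^sup>+v. ennreal (psi \<epsilon> (v - y) * (norm (v - u))\<^sup>2) \<partial>lborel) = ennreal ((norm (y - u))\<^sup>2 + \<epsilon> * d)"
          unfolding d_def by (rule psi_shift_moment[OF eps])
        moreover have "ennreal (f y) * ennreal ((norm (y - u))\<^sup>2 + \<epsilon> * d) = ennreal (f y * (norm (y - u))\<^sup>2) + ennreal (\<epsilon> * d) * ennreal (f y)"
          using f_nonneg[of y] eps d
          by (simp add: ennreal_mult[symmetric] ennreal_plus[symmetric] distrib_left mult_ac del: ennreal_plus)
        ultimately show "ennreal (f y) * (\<integral>\<^sup>+v. ennreal (psi \<epsilon> (v - y) * (norm (v - u))\<^sup>2) \<partial>lborel)
            = ennreal (f y * (norm (y - u))\<^sup>2) + ennreal (\<epsilon> * d) * ennreal (f y)" by simp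
      qed
      also have "\<dots> = X + ennreal (\<epsilon> * d) * (\<integral>\<^sup>+y. ennreal (f y) \<partial>lborel)"
        unfolding X_def by (simp add: nn_integral_add nn_integral_cmult)
      also have "(\<integral>\<^sup>+y. ennreal (f y) \<partial>lborel) = ennreal m"
        unfolding m_def using f_int f_nonneg by (intro nn_integral_eq_integral) auto
      finally show ?thesis using eps d m0 by (simp add: ennreal_mult)
    qed
    have "X + ennreal (\<epsilon> * d * m) \<le> ennreal (\<epsilon> * d * m)"
    proof -
      have "Arho * (S * d) \<le> \<epsilon> * d * m" using Sle Arho d mArho by (simp add: mult_ac mult_right_mono)
      then show ?thesis using lhs rhs by (metis ennreal_leI)
    qed
    then have "ennreal (\<epsilon> * d * m) + X \<le> ennreal (\<epsilon> * d * m) + 0" by (simp add: add.commute)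
    then have "X \<le> 0" by (subst (asm) ennreal_add_left_cancel_le) auto
    then have "X = 0" by simp
    then have "AE y in lborel. ennreal (f y * (norm (y - u))\<^sup>2) = 0"
      unfolding X_def by (subst (asm) nn_integral_0_iff_AE) auto
    then have "AE y in lborel. f y = 0"
      using AE_lborel_singleton[of u]
    proof (eventually_elim)
      case (elim y)
      then have "f y * (norm (y - u))\<^sup>2 \<le> 0" using ennreal_eq_0_iff by blast
      moreover have "(norm (y - u))\<^sup>2 > 0" using elim by simp
      ultimately show ?case using f_nonneg[of y] by (simp add: mult_le_0_iff)
    qed
    with f_nonzero show False by simp
  qed
  define T where "T = S - \<epsilon>"
  have T: "T > 0" using Sgt by (simp add: T_def)
  have epsL: "\<epsilon> * L < 1" using Sgt L unfolding S_def by (simp add: field_simps)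
  define \<rho> where "\<rho> = (2 * pi / \<bar>l2\<bar>) powr (real DIM('a) / 2) *
           exp (l0 + \<epsilon> * \<bar>l2\<bar> * real DIM('a) / 2
                - \<epsilon> * (norm l1)\<^sup>2 / (2 * (1 - \<epsilon> * \<bar>l2\<bar>))
                + (norm l1)\<^sup>2 / (2 * \<bar>l2\<bar> * (1 - \<epsilon> * \<bar>l2\<bar>)))"
  have rho: "\<rho> = Arho"
  proof -
    have ne: "1 - \<epsilon> * L \<noteq> 0" using epsL by simp
    have "- \<epsilon> * (norm l1)\<^sup>2 / (2 * (1 - \<epsilon> * L)) + (norm l1)\<^sup>2 / (2 * L * (1 - \<epsilon> * L)) = (norm l1)\<^sup>2 / (2 * L)"
    proof -
      define D where "D = 1 - \<epsilon> * L"
      define a where "a = (norm l1)\<^sup>2"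
      have D: "D \<noteq> 0" using ne by (simp add: D_def)
      have "- \<epsilon> * a / (2 * D) + a / (2 * L * D) = (a - \<epsilon> * L * a) / (2 * L * D)"
        using L D by (simp add: field_simps)
      also have "a - \<epsilon> * L * a = a * D" by (simp add: D_def algebra_simps)
      also have "a * D / (2 * L * D) = a / (2 * L)" using D by simp
      finally show ?thesis unfolding D_def a_def .
    qed
    then have "l0 + \<epsilon> * L * d / 2 - \<epsilon> * (norm l1)\<^sup>2 / (2 * (1 - \<epsilon> * L)) + (norm l1)\<^sup>2 / (2 * L * (1 - \<epsilon> * L)) = A1"
      unfolding A1_def A0 L_def d_def by (simp add: algebra_simps)
    moreover have "2 * pi / L = 2 * pi * S" unfolding S_def by simp
    ultimately show ?thesis unfolding \<rho>_def Arho_def L(2) d_def by (simp add: mult.commute)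
  qed
  have ueq: "(1 / \<bar>l2\<bar>) *\<^sub>R l1 = u" unfolding u_def L(2) ..
  have Teq: "1 / \<bar>l2\<bar> - \<epsilon> = T" unfolding T_def S_def L(2) ..
  define K where "K y = f y - \<rho> * psi T (y - u)" for y
  have Ki: "integrable lborel K" unfolding K_def using f_int psi_integral(1)[OF T, of u] by auto
  have Kz: "(\<integral>y. K y * psi \<epsilon> (v - y) \<partial>lborel) = 0" for v
  proof -
    have i1: "integrable lborel (\<lambda>y. f y * psi \<epsilon> (v - y))" by (rule conv_integrable[OF f_int eps])
    have i2: "integrable lborel (\<lambda>y. \<rho> * (psi \<epsilon> (v - y) * psi T (y - u)))"
      using psi_semigroup(1)[OF eps T, of v u] by auto
    have "(\<integral>y. K y * psi \<epsilon> (v - y) \<partial>lborel) = (\<integral>y. f y * psi \<epsilon> (v - y) - \<rho> * (psi \<epsilon> (v - y) * psi T (y - u)) \<partial>lborel)"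
      unfolding K_def by (intro Bochner_Integration.integral_cong refl) (simp add: algebra_simps)
    also have "\<dots> = F v - \<rho> * psi (\<epsilon> + T) (v - u)"
      using i1 i2 psi_semigroup(2)[OF eps T, of v u] unfolding F_def Defs.conv_def by simp
    also have "\<epsilon> + T = S" unfolding T_def by simp
    also have "F v - \<rho> * psi S (v - u) = 0" unfolding Fpsi rho by simp
    finally show ?thesis .
  qed
  have "AE y in lborel. K y = 0" by (rule heat_unique_L1[OF Ki eps Kz])
  then have "AE v in lborel. f v = maxwellian \<rho> u T v"
    by eventually_elim (simp add: K_def maxwellian_psi[OF T])
  then show ?thesis unfolding \<rho>_def[symmetric] ueq Teq using l2neg epsL L by auto
qed


theorem lemma7:
  fixes f :: "'a::euclidean_space \<Rightarrow> real"
    and \<epsilon> l0 l2 :: real and l1 :: 'a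
  assumes dim: "DIM('a) \<ge> 2"
    and eps: "\<epsilon> > 0"
    and f_meas: "f \<in> borel_measurable lborel"
    and f_int: "integrable lborel f"
    and f_nonneg: "\<And>v. f v \<ge> 0"
    and f_nonzero: "\<not> (AE v in lborel. f v = 0)"
    and conv_def: "\<And>v. integrable lborel (\<lambda>y. psi \<epsilon> y * ln (conv f (psi \<epsilon>) (v - y)))"
    and eq: "\<And>v. conv (psi \<epsilon>) (\<lambda>w. ln (conv f (psi \<epsilon>) w)) v
                  = l0 + inner l1 v + l2 / 2 * (norm v)\<^sup>2"
  shows "l2 \<noteq> 0 \<and> \<epsilon> * \<bar>l2\<bar> < 1 \<and>
    (AE v in lborel. f v = maxwellian
        ((2 * pi / \<bar>l2\<bar>) powr (real DIM('a) / 2) *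
           exp (l0 + \<epsilon> * \<bar>l2\<bar> * real DIM('a) / 2
                - \<epsilon> * (norm l1)\<^sup>2 / (2 * (1 - \<epsilon> * \<bar>l2\<bar>))
                + (norm l1)\<^sup>2 / (2 * \<bar>l2\<bar> * (1 - \<epsilon> * \<bar>l2\<bar>))))
        ((1 / \<bar>l2\<bar>) *\<^sub>R l1)
        (1 / \<bar>l2\<bar> - \<epsilon>) v)"
  proof -
  have Fexp: "\<And>v. conv f (psi \<epsilon>) v = exp ((l0 - l2 * \<epsilon> * real DIM('a) / 2) + l1 \<bullet> v + l2 / 2 * (norm v)\<^sup>2)"
    by (rule step_quadratic[OF eps f_int f_nonneg f_nonzero conv_def eq])
  show ?thesis by (rule step_final[OF eps f_int f_nonneg f_nonzero Fexp refl])
qed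

end
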